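(* In the setting described in the context, for all sufficiently small $\epsilon>0$ the system (P1)–(P2) has a unique solution, and its first component $w_{\epsilon2,1}(0)=(B_\epsilon R_{\epsilon1}-R_{\epsilon2})/\Delta_\epsilon$ satisfies \[\lim_{\epsilon\to0}w_{\epsilon2,1}(0)=w_{2,1}(0):=\frac{f_{2,1}\langle\Psi_1+\Psi_2,\rho\rangle-2g_{1,1}\langle\widetilde\rho,w_{2,0}\rangle-(g_{2,0}+2\overline g_{1,1})\langle\widetilde\rho,w_{1,1}\rangle-\overline g_{0,2}\langle\widetilde\rho,w_{0,2}\rangle}{2r\omega i-2rA+2},\] where $\rho(s)=-2se^{\omega is}$, $s\in[-r,0]$, and $\widetilde\rho(\zeta)=-2\zeta e^{-\omega i\zeta}$, $\zeta\in[0,r]$.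
   Context: Unperturbed problem. Let $r>0$, $A,B\in\mathbb{R}$, and consider $\dot x(t)=Ax(t)+Bx(t-r)+\hat f(x(t),x(t-r))$, where $\hat f(y,z)=\sum_{j,k\geq0,\,j+k\geq2}\frac{1}{j!k!}C_{j,k}y^jz^k$ is a real $C^\infty$ function near $(0,0)$. Assume $\lambda-A-Be^{-\lambda r}=0$ has roots $\pm\omega i$, $\omega>0$, and all other roots have negative real part. Let $\mathcal{B}_C=C([-r,0],\mathbb{C})$, $\varphi_1(s)=e^{\omega is}$, $\varphi_2=\overline\varphi_1$, $\mathcal M=\mathrm{span}\{\varphi_1,\varphi_2\}$; for $\psi\in C([0,r],\mathbb C)$, $\varphi\in\mathcal B_C$ let $\langle\psi,\varphi\rangle=\psi(0)\varphi(0)+B\int_{-r}^0\psi(\zeta+r)\varphi(\zeta)d\zeta$; $\psi_1(\zeta)=e^{-\omega i\zeta}$, $\Psi_1=\frac{1-(A+i\omega)r}{(1-Ar)^2+\omega^2r^2}\psi_1$, $\Psi_2=\overline\Psi_1$, $\mathcal N=\{\varphi:\langle\Psi_1,\varphi\rangle=\langle\Psi_2,\varphi\rangle=0\}$. The local center manifold at $0$ is the graph of a map from a neighborhood of $0$ in $\mathcal M$ to $\mathcal N$, written $w(z,\overline z)=\sum_{i+j\geq2}\frac1{i!j!}w_{i,j}z^i\overline z^j$ (value at $z\varphi_1+\overline z\varphi_2$), $w_{i,j}\in\mathcal B_C$. Define $f_{i,j}$ by $\hat f(\Phi(0),\Phi(-r))=\sum\frac1{i!j!}f_{i,j}u^i\overline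 u^j$ with $\Phi=u\varphi_1+\overline u\varphi_2+w(u,\overline u)$, and $g_{i,j}=\Psi_1(0)f_{i,j}$. (The equations for $w_{2,1}(0),w_{2,1}(-r)$ obtained from invariance of the center manifold are dependent, so $w_{2,1}(0)$ is defined via the perturbation below.) Perturbed problem. Let $A_\epsilon,B_\epsilon\in\mathbb R$ depend smoothly on $\epsilon>0$ with $A_\epsilon\to A$, $B_\epsilon\to B$ as $\epsilon\searrow0$, chosen so that for all sufficiently small $\epsilon>0$ the equation $\lambda-A_\epsilon-B_\epsilon e^{-\lambda r}=0$ has roots $\lambda_\epsilon=\mu_\epsilon+\omega_\epsilon i$ and $\overline\lambda_\epsilon$ with $\mu_\epsilon>0$, and all other roots have negative real part (then $\mu_\epsilon\to0$, $\omega_\epsilon\to\omega$). Consider $\dot x(t)=A_\epsilon x(t)+B_\epsilon x(t-r)+\hat f(x(t),x(t-r))$. Let $\varphi_{\epsilon1}(s)=e^{\lambda_\epsilon s}$, $\varphi_{\epsilon2}=\overline\varphi_{\epsilon1}$, $\mathcal M_\epsilon$ their span; $\langle\psi,\varphi\rangle_\epsilon=\psi(0)\varphi(0)+B_\epsilon\int_{-r}^0\psi(\zeta+r)\varphi(\zeta)d\zeta$; $\psi_{\epsilon1}(\zeta)=e^{-\lambda_\epsilon\zeta}$, $\Psi_{\epsilon1}=\frac{1+(\overline\lambda_\epsilon-A_\epsilon)r}{(1-A_\epsilon r+\mu_\epsilon r)^2+\omega_\epsilon^2r^2}\psi_{\epsilon1}$, $\Psi_{\epsilon2}=\overline\Psi_{\epsilon1}$,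 $\mathcal N_\epsilon=\{\varphi:\langle\Psi_{\epsilon1},\varphi\rangle_\epsilon=\langle\Psi_{\epsilon2},\varphi\rangle_\epsilon=0\}$. The local unstable manifold at $0$ is the graph of a map from a neighborhood of $0$ in $\mathcal M_\epsilon$ to $\mathcal N_\epsilon$, written $w_\epsilon(v,\overline v)=\sum_{i+j\geq2}\frac1{i!j!}w_{\epsilon i,j}v^i\overline v^j$ (value at $v\varphi_{\epsilon1}+\overline v\varphi_{\epsilon2}$). Define $f_{\epsilon i,j}$ by $\hat f(\Phi_\epsilon(0),\Phi_\epsilon(-r))=\sum\frac1{i!j!}f_{\epsilon i,j}v^i\overline v^j$ with $\Phi_\epsilon=v\varphi_{\epsilon1}+\overline v\varphi_{\epsilon2}+w_\epsilon(v,\overline v)$, and $g_{\epsilon i,j}=\Psi_{\epsilon1}(0)f_{\epsilon i,j}$. Let $\kappa_\epsilon=2\lambda_\epsilon+\overline\lambda_\epsilon$ and $\Delta_\epsilon=-B_\epsilon e^{-\kappa_\epsilon r}-A_\epsilon+\kappa_\epsilon$. The system (P1)–(P2) for $X=w_{\epsilon2,1}(0)$, $Y=w_{\epsilon2,1}(-r)$ is $-e^{-\kappa_\epsilon r}X+Y=R_{\epsilon1}$, $(A_\epsilon-\kappa_\epsilon)X+B_\epsilon Y=R_{\epsilon2}$ with $R_{\epsilon1}=\frac{-1}{\lambda_\epsilon+\overline\lambda_\epsilon}g_{\epsilon2,1}(e^{-\lambda_\epsilon r}-e^{-\kappa_\epsilon r})-\frac1{2\lambda_\epsilon}\overline g_{\epsilon1,2}(e^{-\overline\lambda_\epsilon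 r}-e^{-\kappa_\epsilon r})-2g_{\epsilon1,1}e^{-\kappa_\epsilon r}\int_{-r}^0w_{\epsilon2,0}(\theta)e^{-\kappa_\epsilon\theta}d\theta-(g_{\epsilon2,0}+2\overline g_{\epsilon1,1})e^{-\kappa_\epsilon r}\int_{-r}^0w_{\epsilon1,1}(\theta)e^{-\kappa_\epsilon\theta}d\theta-\overline g_{\epsilon0,2}e^{-\kappa_\epsilon r}\int_{-r}^0w_{\epsilon0,2}(\theta)e^{-\kappa_\epsilon\theta}d\theta$ and $R_{\epsilon2}=g_{\epsilon2,1}+\overline g_{\epsilon1,2}-f_{\epsilon2,1}+2g_{\epsilon1,1}w_{\epsilon2,0}(0)+(g_{\epsilon2,0}+2\overline g_{\epsilon1,1})w_{\epsilon1,1}(0)+\overline g_{\epsilon0,2}w_{\epsilon0,2}(0)$. *)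

theory Defs
  imports "HOL-Analysis.Analysis"
begin

definition charfun :: "real \<Rightarrow> real \<Rightarrow> real \<Rightarrow> complex \<Rightarrow> complex" where
  "charfun A B r z = z - of_real A - of_real B * exp (- z * of_real r)"

text \<open>Normalisation constant Psi(0) of the adjoint eigenfunction for the root lam
  (lam = i omega gives Psi_1(0), lam = lambda_eps gives Psi_{eps1}(0)).\<close>
definition Psi0 :: "real \<Rightarrow> real \<Rightarrow> complex \<Rightarrow> complex" where
  "Psi0 A r lam = (1 + (cnj lam - of_real A) * of_real r) /
      of_real ((1 - A * r + Re lam * r)\<^sup>2 + (Im lam)\<^sup>2 * r\<^sup>2)"

definition pairing :: "real \<Rightarrow> real \<Rightarrow> (real \<Rightarrow> complex) \<Rightarrow> (real \<Rightarrow> complex) \<Rightarrow> complex" where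
  "pairing B r psi phi = psi 0 * phi 0 + of_real B * integral {-r..0} (\<lambda>\<zeta>. psi (\<zeta> + r) * phi \<zeta>)"

text \<open>Taylor polynomial of order 3 of fhat (the only part affecting coefficients of
  total order <= 3): sum over 2 <= j+k <= 3 of C_{j,k} y^j z^k / (j! k!).\<close>
definition fhat3 :: "(nat \<Rightarrow> nat \<Rightarrow> real) \<Rightarrow> complex \<Rightarrow> complex \<Rightarrow> complex" where
  "fhat3 C y z = (\<Sum>j\<le>3. \<Sum>k\<le>3. if 2 \<le> j + k \<and> j + k \<le> 3
      then of_real (C j k) / of_nat (fact j * fact k) * y ^ j * z ^ k else 0)"

text \<open>Coefficient F_{i,j} of a series F(u,v) = sum F_{i,j} u^i v^j/(i! j!).\<close>
definition taylor_coeff :: "(complex \<Rightarrow> complex \<Rightarrow> complex) \<Rightarrow> nat \<Rightarrow> nat \<Rightarrow> complex" where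
  "taylor_coeff F i j = (deriv ^^ i) (\<lambda>u. (deriv ^^ j) (\<lambda>v. F u v) 0) 0"

text \<open>f_{i,j} (i+j <= 3): coefficients of fhat(Phi(0), Phi(-r)) with
  Phi = u phi_1 + v phi_2 + w, phi_1(s) = e^{lam s}, phi_2 = conj phi_1, where only the
  second-order part of w (w20,w11,w02) influences coefficients of order <= 3.\<close>
definition fcoef :: "(nat \<Rightarrow> nat \<Rightarrow> real) \<Rightarrow> real \<Rightarrow> complex \<Rightarrow>
    (real \<Rightarrow> complex) \<Rightarrow> (real \<Rightarrow> complex) \<Rightarrow> (real \<Rightarrow> complex) \<Rightarrow> nat \<Rightarrow> nat \<Rightarrow> complex" where
  "fcoef C r lam w20 w11 w02 i j = taylor_coeff (\<lambda>u v. fhat3 C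
      (u + v + w20 0 * u\<^sup>2 / 2 + w11 0 * u * v + w02 0 * v\<^sup>2 / 2)
      (u * exp (- lam * of_real r) + v * exp (- cnj lam * of_real r)
        + w20 (-r) * u\<^sup>2 / 2 + w11 (-r) * u * v + w02 (-r) * v\<^sup>2 / 2)) i j"

definition gcoef :: "real \<Rightarrow> (nat \<Rightarrow> nat \<Rightarrow> real) \<Rightarrow> real \<Rightarrow> complex \<Rightarrow>
    (real \<Rightarrow> complex) \<Rightarrow> (real \<Rightarrow> complex) \<Rightarrow> (real \<Rightarrow> complex) \<Rightarrow> nat \<Rightarrow> nat \<Rightarrow> complex" where
  "gcoef A C r lam w20 w11 w02 i j = Psi0 A r lam * fcoef C r lam w20 w11 w02 i j"

text \<open>Second-order invariance equations for w_{i,j} (i+j = 2) of the invariant manifold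
  tangent to span{e^{lam s}, e^{conj lam s}}:
  on [-r,0]:  w' = (i lam + j conj lam) w + g_{i,j} phi_1 + conj(g_{j,i}) phi_2,
  at 0:       (i lam + j conj lam) w(0) + g_{i,j} + conj(g_{j,i}) = A w(0) + B w(-r) + f_{i,j}.\<close>
definition inv_eq :: "real \<Rightarrow> real \<Rightarrow> real \<Rightarrow> complex \<Rightarrow> nat \<Rightarrow> nat \<Rightarrow> (real \<Rightarrow> complex)
    \<Rightarrow> complex \<Rightarrow> complex \<Rightarrow> complex \<Rightarrow> bool" where
  "inv_eq A B r lam i j w f g gb \<longleftrightarrow>
     (\<forall>\<theta>\<in>{-r..0}. (w has_vector_derivative
        ((of_nat i * lam + of_nat j * cnj lam) * w \<theta> + g * exp (lam * of_real \<theta>)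
           + gb * exp (cnj lam * of_real \<theta>))) (at \<theta> within {-r..0}))
     \<and> (of_nat i * lam + of_nat j * cnj lam) * w 0 + g + gb
         = of_real A * w 0 + of_real B * w (-r) + f"

definition second_order :: "real \<Rightarrow> real \<Rightarrow> real \<Rightarrow> complex \<Rightarrow> (nat \<Rightarrow> nat \<Rightarrow> real) \<Rightarrow>
    (real \<Rightarrow> complex) \<Rightarrow> (real \<Rightarrow> complex) \<Rightarrow> (real \<Rightarrow> complex) \<Rightarrow> bool" where
  "second_order A B r lam C w20 w11 w02 \<longleftrightarrow>
     (let f = fcoef C r lam w20 w11 w02; g = gcoef A C r lam w20 w11 w02 in
       inv_eq A B r lam 2 0 w20 (f 2 0) (g 2 0) (cnj (g 0 2))
     \<and> inv_eq A B r lam 1 1 w11 (f 1 1) (g 1 1) (cnj (g 1 1))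
     \<and> inv_eq A B r lam 0 2 w02 (f 0 2) (g 0 2) (cnj (g 2 0)))"

definition kappa :: "complex \<Rightarrow> complex" where
  "kappa lam = 2 * lam + cnj lam"

definition Delta :: "real \<Rightarrow> real \<Rightarrow> real \<Rightarrow> complex \<Rightarrow> complex" where
  "Delta A B r lam = - of_real B * exp (- kappa lam * of_real r) - of_real A + kappa lam"

definition R1 :: "real \<Rightarrow> (nat \<Rightarrow> nat \<Rightarrow> real) \<Rightarrow> real \<Rightarrow> complex \<Rightarrow>
    (real \<Rightarrow> complex) \<Rightarrow> (real \<Rightarrow> complex) \<Rightarrow> (real \<Rightarrow> complex) \<Rightarrow> complex" where
  "R1 A C r lam w20 w11 w02 =
     (let g = gcoef A C r lam w20 w11 w02; k = kappa lam;
          I = (\<lambda>w. integral {-r..0} (\<lambda>\<theta>. w \<theta> * exp (- k * of_real \<theta>))) in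
       - 1 / (lam + cnj lam) * g 2 1 * (exp (- lam * of_real r) - exp (- k * of_real r))
       - 1 / (2 * lam) * cnj (g 1 2) * (exp (- cnj lam * of_real r) - exp (- k * of_real r))
       - 2 * g 1 1 * exp (- k * of_real r) * I w20
       - (g 2 0 + 2 * cnj (g 1 1)) * exp (- k * of_real r) * I w11
       - cnj (g 0 2) * exp (- k * of_real r) * I w02)"

definition R2 :: "real \<Rightarrow> (nat \<Rightarrow> nat \<Rightarrow> real) \<Rightarrow> real \<Rightarrow> complex \<Rightarrow>
    (real \<Rightarrow> complex) \<Rightarrow> (real \<Rightarrow> complex) \<Rightarrow> (real \<Rightarrow> complex) \<Rightarrow> complex" where
  "R2 A C r lam w20 w11 w02 =
     (let f = fcoef C r lam w20 w11 w02; g = gcoef A C r lam w20 w11 w02 in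
       g 2 1 + cnj (g 1 2) - f 2 1 + 2 * g 1 1 * w20 0
       + (g 2 0 + 2 * cnj (g 1 1)) * w11 0 + cnj (g 0 2) * w02 0)"

text \<open>The linear system (P1)-(P2) for X = w_{eps2,1}(0), Y = w_{eps2,1}(-r).\<close>
definition sysP :: "real \<Rightarrow> real \<Rightarrow> (nat \<Rightarrow> nat \<Rightarrow> real) \<Rightarrow> real \<Rightarrow> complex \<Rightarrow>
    (real \<Rightarrow> complex) \<Rightarrow> (real \<Rightarrow> complex) \<Rightarrow> (real \<Rightarrow> complex) \<Rightarrow> complex \<Rightarrow> complex \<Rightarrow> bool" where
  "sysP A B C r lam w20 w11 w02 X Y \<longleftrightarrow>
     - exp (- kappa lam * of_real r) * X + Y = R1 A C r lam w20 w11 w02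
     \<and> (of_real A - kappa lam) * X + of_real B * Y = R2 A C r lam w20 w11 w02"

definition W21 :: "real \<Rightarrow> real \<Rightarrow> (nat \<Rightarrow> nat \<Rightarrow> real) \<Rightarrow> real \<Rightarrow> real \<Rightarrow>
    (real \<Rightarrow> complex) \<Rightarrow> (real \<Rightarrow> complex) \<Rightarrow> (real \<Rightarrow> complex) \<Rightarrow> complex" where
  "W21 A B C r \<omega> w20 w11 w02 =
     (let lam = \<i> * of_real \<omega>;
          f = fcoef C r lam w20 w11 w02; g = gcoef A C r lam w20 w11 w02;
          Psi1 = (\<lambda>\<zeta>. Psi0 A r lam * exp (- lam * of_real \<zeta>));
          Psi2 = (\<lambda>\<zeta>. cnj (Psi1 \<zeta>));
          rho = (\<lambda>s. - 2 * of_real s * exp (lam * of_real s));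
          rhot = (\<lambda>\<zeta>. - 2 * of_real \<zeta> * exp (- lam * of_real \<zeta>)) in
       (f 2 1 * pairing B r (\<lambda>\<zeta>. Psi1 \<zeta> + Psi2 \<zeta>) rho
        - 2 * g 1 1 * pairing B r rhot w20
        - (g 2 0 + 2 * cnj (g 1 1)) * pairing B r rhot w11
        - cnj (g 0 2) * pairing B r rhot w02)
       / (2 * of_real r * of_real \<omega> * \<i> - 2 * of_real r * of_real A + 2))"

end

theory Submission
  imports Defs "HOL-Computational_Algebra.Polynomial" "HOL-Real_Asymp.Real_Asymp"
begin

lemma higher_deriv_poly: "(deriv ^^ n) (poly p) = poly ((pderiv ^^ n) (p::complex poly))"
proof (induction n)
  case 0 then show ?case by simp
next
  case (Suc n)
  have "deriv (poly ((pderiv ^^ n) p)) = poly (pderiv ((pderiv ^^ n) p))"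
    by (rule ext, rule DERIV_imp_deriv, rule poly_DERIV)
  then show ?case using Suc by simp
qed

lemma higher_deriv_poly0: "(deriv ^^ n) (poly p) 0 = fact n * coeff (p::complex poly) n"
  by (simp add: higher_deriv_poly poly_0_coeff_0 coeff_higher_pderiv pochhammer_fact)

definition ev :: "complex \<Rightarrow> complex \<Rightarrow> complex poly poly \<Rightarrow> complex" where
  "ev u v P = poly (poly P [:u:]) v"

lemma coeff_poly_const: "coeff (poly P [:u:]) j = poly (map_poly (\<lambda>q. coeff q j) P) u"
  by (induction P) (auto simp: map_poly_pCons)

lemma taylor_ev: "taylor_coeff (\<lambda>u v. ev u v P) i j = fact i * fact j * coeff (coeff P i) j"
proof -
  have 1: "(\<lambda>u. (deriv ^^ j) (\<lambda>v. ev u v P) 0) = poly (smult (fact j) (map_poly (\<lambda>q. coeff q j) P))"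
  proof
    fix u
    have "(\<lambda>v. ev u v P) = poly (poly P [:u:])" by (auto simp: ev_def)
    then show "(deriv ^^ j) (\<lambda>v. ev u v P) 0 = poly (smult (fact j) (map_poly (\<lambda>q. coeff q j) P)) u"
      by (simp add: higher_deriv_poly0 coeff_poly_const)
  qed
  show ?thesis unfolding taylor_coeff_def 1 higher_deriv_poly0
    by (simp add: coeff_map_poly)
qed

definition Yp :: "complex \<Rightarrow> complex \<Rightarrow> complex \<Rightarrow> complex poly poly" where
  "Yp a b c = [: [:0,1,c/2:], [:1,b:], [:a/2:] :]"
definition Zp :: "complex \<Rightarrow> complex \<Rightarrow> complex \<Rightarrow> complex \<Rightarrow> complex \<Rightarrow> complex poly poly" where
  "Zp p q a b c = [: [:0,q,c/2:], [:p,b:], [:a/2:] :]"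
definition fhat3P :: "(nat \<Rightarrow> nat \<Rightarrow> real) \<Rightarrow> complex poly poly \<Rightarrow> complex poly poly \<Rightarrow> complex poly poly" where
  "fhat3P C y z = (\<Sum>j\<le>3. \<Sum>k\<le>3. if 2 \<le> j + k \<and> j + k \<le> 3
      then [:[:of_real (C j k) / of_nat (fact j * fact k):]:] * y ^ j * z ^ k else 0)"

lemma ev_mult: "ev u v (P * Q) = ev u v P * ev u v Q" by (simp add: ev_def)
lemma ev_add: "ev u v (P + Q) = ev u v P + ev u v Q" by (simp add: ev_def)
lemma ev_power: "ev u v (P ^ n) = ev u v P ^ n" by (simp add: ev_def poly_power)
lemma ev_sum: "ev u v (sum f A) = (\<Sum>x\<in>A. ev u v (f x))" by (simp add: ev_def poly_sum)
lemma ev_const: "ev u v [:[:c:]:] = c" by (simp add: ev_def)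
lemma ev_0: "ev u v 0 = 0" by (simp add: ev_def)
lemma ev_smult: "ev u v (smult [:c:] P) = c * ev u v P" by (simp add: ev_def)

lemma ev_fhat3P: "ev u v (fhat3P C y z) = fhat3 C (ev u v y) (ev u v z)"
  unfolding fhat3P_def fhat3_def ev_sum
  by (intro sum.cong refl) (simp add: ev_mult ev_power ev_const ev_0 ev_smult)

lemma ev_Yp: "ev u v (Yp a b c) = u + v + a * u\<^sup>2 / 2 + b * u * v + c * v\<^sup>2 / 2"
  by (simp add: ev_def Yp_def algebra_simps power2_eq_square)
lemma ev_Zp: "ev u v (Zp p q a b c) = u * p + v * q + a * u\<^sup>2 / 2 + b * u * v + c * v\<^sup>2 / 2"
  by (simp add: ev_def Zp_def algebra_simps power2_eq_square)

lemma fcoef_coeff: "fcoef C r lam w20 w11 w02 i j = fact i * fact j *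
   coeff (coeff (fhat3P C (Yp (w20 0) (w11 0) (w02 0))
      (Zp (exp (- lam * of_real r)) (exp (- cnj lam * of_real r)) (w20 (-r)) (w11 (-r)) (w02 (-r)))) i) j"
proof -
  have "(\<lambda>u v. fhat3 C
      (u + v + w20 0 * u\<^sup>2 / 2 + w11 0 * u * v + w02 0 * v\<^sup>2 / 2)
      (u * exp (- lam * of_real r) + v * exp (- cnj lam * of_real r)
        + w20 (-r) * u\<^sup>2 / 2 + w11 (-r) * u * v + w02 (-r) * v\<^sup>2 / 2))
     = (\<lambda>u v. ev u v (fhat3P C (Yp (w20 0) (w11 0) (w02 0))
      (Zp (exp (- lam * of_real r)) (exp (- cnj lam * of_real r)) (w20 (-r)) (w11 (-r)) (w02 (-r)))))"
    by (simp add: ev_fhat3P ev_Yp ev_Zp)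
  then show ?thesis unfolding fcoef_def by (simp add: taylor_ev)
qed

definition c2 :: "complex poly poly \<Rightarrow> nat \<Rightarrow> nat \<Rightarrow> complex" where
  "c2 P i j = coeff (coeff P i) j"

lemma c2_mult: "c2 (P * Q) i j = (\<Sum>a\<le>i. \<Sum>b\<le>j. c2 P a b * c2 Q (i - a) (j - b))"
  by (simp add: c2_def coeff_mult coeff_sum sum_distrib_left)

lemma c2_smult: "c2 (smult [:c:] P) i j = c * c2 P i j" by (simp add: c2_def)
lemma c2_add: "c2 (P + Q) i j = c2 P i j + c2 Q i j" by (simp add: c2_def)
lemma c2_const: "c2 [:[:c:]:] i j = (if i = 0 \<and> j = 0 then c else 0)"
  by (simp add: c2_def coeff_pCons split: nat.split)

lemma c2_Yp: "c2 (Yp a b c) i j = (if i=0 \<and> j=1 then 1 else if i=0 \<and> j=2 then c/2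
   else if i=1 \<and> j=0 then 1 else if i=1 \<and> j=1 then b else if i=2 \<and> j=0 then a/2 else 0)"
  by (auto simp: c2_def Yp_def coeff_pCons split: nat.split)
lemma c2_Zp: "c2 (Zp p q a b c) i j = (if i=0 \<and> j=1 then q else if i=0 \<and> j=2 then c/2
   else if i=1 \<and> j=0 then p else if i=1 \<and> j=1 then b else if i=2 \<and> j=0 then a/2 else 0)"
  by (auto simp: c2_def Zp_def coeff_pCons split: nat.split)

lemma c2_fhat3P_21: "c2 (fhat3P C (Yp a b c) (Zp p q a' b' c')) 2 1 =
   (of_real (C 2 0) * (2*b + a) + 2 * of_real (C 1 1) * (b' + a'/2 + a*q/2 + b*p) + of_real (C 0 2) * (2*p*b' + q*a')
    + of_real (C 3 0) + of_real (C 2 1) * (q + 2*p) + of_real (C 1 2) * (2*p*q + p^2) + of_real (C 0 3) * p^2 * q) / 2"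
  unfolding fhat3P_def
  by (simp add: c2_def[symmetric] c2_add c2_mult c2_const c2_Yp c2_Zp eval_nat_numeral coeff_sum c2_smult;
    (simp add: field_simps)?)

definition F21 :: "(nat \<Rightarrow> nat \<Rightarrow> real) \<Rightarrow> complex \<Rightarrow> complex \<Rightarrow> complex \<Rightarrow> complex \<Rightarrow> complex \<Rightarrow> complex \<Rightarrow> complex \<Rightarrow> complex \<Rightarrow> complex" where
  "F21 C p q a b c a' b' c' = of_real (C 2 0) * (2*b + a) + 2 * of_real (C 1 1) * (b' + a'/2 + a*q/2 + b*p) + of_real (C 0 2) * (2*p*b' + q*a')
    + of_real (C 3 0) + of_real (C 2 1) * (q + 2*p) + of_real (C 1 2) * (2*p*q + p^2) + of_real (C 0 3) * p^2 * q"

lemma c2_fhat3P_12: "c2 (fhat3P C (Yp a b c) (Zp p q a' b' c')) 1 2 = F21 C q p c b a c' b' a' / 2"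
  unfolding fhat3P_def F21_def
  by (simp add: c2_def[symmetric] c2_add c2_mult c2_const c2_Yp c2_Zp eval_nat_numeral coeff_sum c2_smult;
    (simp add: field_simps)?)

lemma c2_fhat3P_20: "c2 (fhat3P C (Yp a b c) (Zp p q a' b' c')) 2 0 = (of_real (C 2 0) + 2 * of_real (C 1 1) * p + of_real (C 0 2) * p^2) / 2"
  unfolding fhat3P_def
  by (simp add: c2_def[symmetric] c2_add c2_mult c2_const c2_Yp c2_Zp eval_nat_numeral coeff_sum c2_smult;
    (simp add: field_simps)?)

lemma c2_fhat3P_02: "c2 (fhat3P C (Yp a b c) (Zp p q a' b' c')) 0 2 = (of_real (C 2 0) + 2 * of_real (C 1 1) * q + of_real (C 0 2) * q^2) / 2"
  unfolding fhat3P_def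
  by (simp add: c2_def[symmetric] c2_add c2_mult c2_const c2_Yp c2_Zp eval_nat_numeral coeff_sum c2_smult;
    (simp add: field_simps)?)

lemma c2_fhat3P_11: "c2 (fhat3P C (Yp a b c) (Zp p q a' b' c')) 1 1 = of_real (C 2 0) + of_real (C 1 1) * (p + q) + of_real (C 0 2) * p * q"
  unfolding fhat3P_def
  by (simp add: c2_def[symmetric] c2_add c2_mult c2_const c2_Yp c2_Zp eval_nat_numeral coeff_sum c2_smult;
    (simp add: field_simps)?)

lemma fcoef_c2: "fcoef C r lam w20 w11 w02 i j = fact i * fact j *
   c2 (fhat3P C (Yp (w20 0) (w11 0) (w02 0))
      (Zp (exp (- lam * of_real r)) (exp (- cnj lam * of_real r)) (w20 (-r)) (w11 (-r)) (w02 (-r)))) i j"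
  by (simp add: fcoef_coeff c2_def)

lemma fcoef_21: "fcoef C r lam w20 w11 w02 2 1 = F21 C (exp (- lam * of_real r)) (exp (- cnj lam * of_real r))
   (w20 0) (w11 0) (w02 0) (w20 (-r)) (w11 (-r)) (w02 (-r))"
  unfolding fcoef_c2 c2_fhat3P_21 by (simp add: F21_def)
lemma fcoef_12: "fcoef C r lam w20 w11 w02 1 2 = F21 C (exp (- cnj lam * of_real r)) (exp (- lam * of_real r))
   (w02 0) (w11 0) (w20 0) (w02 (-r)) (w11 (-r)) (w20 (-r))"
  unfolding fcoef_c2 c2_fhat3P_12 by simp
lemma fcoef_20: "fcoef C r lam w20 w11 w02 2 0 = of_real (C 2 0) + 2 * of_real (C 1 1) * exp (- lam * of_real r) + of_real (C 0 2) * exp (- lam * of_real r)^2"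
  unfolding fcoef_c2 c2_fhat3P_20 by simp
lemma fcoef_02: "fcoef C r lam w20 w11 w02 0 2 = of_real (C 2 0) + 2 * of_real (C 1 1) * exp (- cnj lam * of_real r) + of_real (C 0 2) * exp (- cnj lam * of_real r)^2"
  unfolding fcoef_c2 c2_fhat3P_02 by simp
lemma fcoef_11: "fcoef C r lam w20 w11 w02 1 1 = of_real (C 2 0) + of_real (C 1 1) * (exp (- lam * of_real r) + exp (- cnj lam * of_real r)) + of_real (C 0 2) * exp (- lam * of_real r) * exp (- cnj lam * of_real r)"
  unfolding fcoef_c2 c2_fhat3P_11 by simp

definition Kf :: "real \<Rightarrow> complex \<Rightarrow> complex" where
  "Kf r s = integral {-r..0} (\<lambda>\<theta>. exp (s * of_real \<theta>))"
definition Lf :: "real \<Rightarrow> complex \<Rightarrow> complex" where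
  "Lf r s = integral {-r..0} (\<lambda>\<theta>. (of_real \<theta> + of_real r) * exp (s * of_real \<theta>))"

lemma hvd_exp: "((\<lambda>\<theta>::real. exp (s * of_real \<theta>)) has_vector_derivative (s * exp (s * of_real \<theta>))) (at \<theta> within S)"
  for s :: complex
proof -
  have "((\<lambda>z. exp (s * z)) has_field_derivative (s * exp (s * of_real \<theta>))) (at (of_real \<theta>))"
    by (auto intro!: derivative_eq_intros)
  from has_vector_derivative_real_field[OF this] show ?thesis .
qed

lemma hvd_ofreal: "((\<lambda>\<theta>::real. (of_real \<theta> + of_real r :: complex)) has_vector_derivative 1) (at \<theta> within S)"
  by (auto intro!: derivative_eq_intros)

lemma cont_exp: "continuous_on S (\<lambda>\<theta>::real. exp (s * (of_real \<theta>::complex)))"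
  by (intro continuous_intros)

lemma Kf_int: "((\<lambda>\<theta>. exp (s * of_real \<theta>)) has_integral Kf r s) {-r..0}"
  unfolding Kf_def by (intro integrable_integral integrable_continuous_interval cont_exp)

lemma Lf_int: "((\<lambda>\<theta>. (of_real \<theta> + of_real r) * exp (s * of_real \<theta>)) has_integral Lf r s) {-r..0}"
  unfolding Lf_def by (intro integrable_integral integrable_continuous_interval continuous_intros)

lemma Kf_closed: assumes "r \<ge> 0" "s \<noteq> 0" shows "Kf r s = (1 - exp (- s * of_real r)) / s"
proof -
  have "((\<lambda>\<theta>. s * exp (s * of_real \<theta>)) has_integral (exp (s * of_real 0) - exp (s * of_real (-r)))) {-r..0}"
    using assms by (intro fundamental_theorem_of_calculus) (auto intro: hvd_exp)
  from has_integral_divide[OF this, of s]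
  have "((\<lambda>\<theta>. exp (s * of_real \<theta>)) has_integral (exp (s * of_real 0) - exp (s * of_real (-r))) / s) {-r..0}"
    using assms by simp
  from has_integral_unique[OF Kf_int this] show ?thesis by simp
qed

lemma Kf_zero: assumes "r \<ge> 0" shows "Kf r 0 = of_real r"
proof -
  have "Kf r 0 = integral {-r..0} (\<lambda>\<theta>::real. 1::complex)" by (simp add: Kf_def)
  also have "\<dots> = of_real r" using assms by (simp add: scaleR_conv_of_real)
  finally show ?thesis .
qed

lemma ode_int:
  fixes w :: "real \<Rightarrow> complex"
  assumes r: "r > 0"
    and d: "\<forall>\<theta>\<in>{-r..0}. (w has_vector_derivative (\<nu> * w \<theta> + a * exp (l1 * of_real \<theta>) + b * exp (l2 * of_real \<theta>))) (at \<theta> within {-r..0})"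
  shows "(\<kappa> - \<nu>) * integral {-r..0} (\<lambda>\<theta>. w \<theta> * exp (- \<kappa> * of_real \<theta>))
     = w (-r) * exp (\<kappa> * of_real r) - w 0 + a * Kf r (l1 - \<kappa>) + b * Kf r (l2 - \<kappa>)"
proof -
  let ?I = "integral {-r..0} (\<lambda>\<theta>. w \<theta> * exp (- \<kappa> * of_real \<theta>))"
  have cw: "continuous_on {-r..0} w"
    by (rule continuous_on_vector_derivative[of _ w "\<lambda>\<theta>. \<nu> * w \<theta> + a * exp (l1 * of_real \<theta>) + b * exp (l2 * of_real \<theta>)"]) (use d in blast)
  have Iint: "((\<lambda>\<theta>. w \<theta> * exp (- \<kappa> * of_real \<theta>)) has_integral ?I) {-r..0}"
    by (intro integrable_integral integrable_continuous_interval continuous_intros cw)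
  have "((\<lambda>\<theta>. w \<theta> * exp (- \<kappa> * of_real \<theta>)) has_vector_derivative
     (w \<theta> * (- \<kappa> * exp (- \<kappa> * of_real \<theta>)) + (\<nu> * w \<theta> + a * exp (l1 * of_real \<theta>) + b * exp (l2 * of_real \<theta>)) * exp (- \<kappa> * of_real \<theta>)))
     (at \<theta> within {-r..0})" if "\<theta> \<in> {-r..0}" for \<theta>
    using d that by (intro has_vector_derivative_mult hvd_exp) auto
  from fundamental_theorem_of_calculus[OF _ this]
  have 1: "((\<lambda>\<theta>. w \<theta> * (- \<kappa> * exp (- \<kappa> * of_real \<theta>)) + (\<nu> * w \<theta> + a * exp (l1 * of_real \<theta>) + b * exp (l2 * of_real \<theta>)) * exp (- \<kappa> * of_real \<theta>))
     has_integral (w 0 * exp (- \<kappa> * of_real 0) - w (-r) * exp (- \<kappa> * of_real (-r)))) {-r..0}"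
    using r by simp
  have eq: "(\<lambda>\<theta>. w \<theta> * (- \<kappa> * exp (- \<kappa> * of_real \<theta>)) + (\<nu> * w \<theta> + a * exp (l1 * of_real \<theta>) + b * exp (l2 * of_real \<theta>)) * exp (- \<kappa> * of_real \<theta>))
     = (\<lambda>\<theta>. (\<nu> - \<kappa>) * (w \<theta> * exp (- \<kappa> * of_real \<theta>)) + a * exp ((l1 - \<kappa>) * of_real \<theta>) + b * exp ((l2 - \<kappa>) * of_real \<theta>))"
  proof (rule ext)
    fix t :: real
    have e: "exp (l * of_real t) * exp (- \<kappa> * of_real t) = exp ((l - \<kappa>) * of_real t)" for l
      by (simp add: exp_add[symmetric] left_diff_distrib)
    have "w t * (- \<kappa> * exp (- \<kappa> * of_real t)) + (\<nu> * w t + a * exp (l1 * of_real t) + b * exp (l2 * of_real t)) * exp (- \<kappa> * of_real t)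
      = (\<nu> - \<kappa>) * (w t * exp (- \<kappa> * of_real t)) + a * (exp (l1 * of_real t) * exp (- \<kappa> * of_real t)) + b * (exp (l2 * of_real t) * exp (- \<kappa> * of_real t))"
      by (simp only: ring_distribs mult.assoc mult.left_commute) (simp add: algebra_simps)
    then show "w t * (- \<kappa> * exp (- \<kappa> * of_real t)) + (\<nu> * w t + a * exp (l1 * of_real t) + b * exp (l2 * of_real t)) * exp (- \<kappa> * of_real t)
      = (\<nu> - \<kappa>) * (w t * exp (- \<kappa> * of_real t)) + a * exp ((l1 - \<kappa>) * of_real t) + b * exp ((l2 - \<kappa>) * of_real t)"
      by (simp only: e)
  qed
  have 2: "((\<lambda>\<theta>. (\<nu> - \<kappa>) * (w \<theta> * exp (- \<kappa> * of_real \<theta>)) + a * exp ((l1 - \<kappa>) * of_real \<theta>) + b * exp ((l2 - \<kappa>) * of_real \<theta>))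
     has_integral ((\<nu> - \<kappa>) * ?I + a * Kf r (l1 - \<kappa>) + b * Kf r (l2 - \<kappa>))) {-r..0}"
    by (intro has_integral_add has_integral_mult_right Iint Kf_int)
  from 2 have 3: "((\<lambda>\<theta>. w \<theta> * (- \<kappa> * exp (- \<kappa> * of_real \<theta>)) + (\<nu> * w \<theta> + a * exp (l1 * of_real \<theta>) + b * exp (l2 * of_real \<theta>)) * exp (- \<kappa> * of_real \<theta>))
     has_integral ((\<nu> - \<kappa>) * ?I + a * Kf r (l1 - \<kappa>) + b * Kf r (l2 - \<kappa>))) {-r..0}"
    unfolding eq .
  from has_integral_unique[OF 1 3]
  have "w 0 * exp (- \<kappa> * of_real 0) - w (-r) * exp (- \<kappa> * of_real (-r)) = (\<nu> - \<kappa>) * ?I + a * Kf r (l1 - \<kappa>) + b * Kf r (l2 - \<kappa>)" .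
  then show ?thesis by (simp add: algebra_simps)
qed

lemma ode_int2:
  fixes w :: "real \<Rightarrow> complex"
  assumes r: "r > 0"
    and d: "\<forall>\<theta>\<in>{-r..0}. (w has_vector_derivative (\<nu> * w \<theta> + a * exp (l1 * of_real \<theta>) + b * exp (l2 * of_real \<theta>))) (at \<theta> within {-r..0})"
  shows "(\<kappa> - \<nu>) * integral {-r..0} (\<lambda>\<theta>. (of_real \<theta> + of_real r) * (w \<theta> * exp (- \<kappa> * of_real \<theta>)))
     = integral {-r..0} (\<lambda>\<theta>. w \<theta> * exp (- \<kappa> * of_real \<theta>)) - of_real r * w 0 + a * Lf r (l1 - \<kappa>) + b * Lf r (l2 - \<kappa>)"
proof -
  let ?I = "integral {-r..0} (\<lambda>\<theta>. w \<theta> * exp (- \<kappa> * of_real \<theta>))"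
  let ?M = "integral {-r..0} (\<lambda>\<theta>. (of_real \<theta> + of_real r) * (w \<theta> * exp (- \<kappa> * of_real \<theta>)))"
  have cw: "continuous_on {-r..0} w"
    by (rule continuous_on_vector_derivative[of _ w "\<lambda>\<theta>. \<nu> * w \<theta> + a * exp (l1 * of_real \<theta>) + b * exp (l2 * of_real \<theta>)"]) (use d in blast)
  have Iint: "((\<lambda>\<theta>. w \<theta> * exp (- \<kappa> * of_real \<theta>)) has_integral ?I) {-r..0}"
    by (intro integrable_integral integrable_continuous_interval continuous_intros cw)
  have Mint: "((\<lambda>\<theta>. (of_real \<theta> + of_real r) * (w \<theta> * exp (- \<kappa> * of_real \<theta>))) has_integral ?M) {-r..0}"
    by (intro integrable_integral integrable_continuous_interval continuous_intros cw)
  have "((\<lambda>\<theta>. (of_real \<theta> + of_real r) * (w \<theta> * exp (- \<kappa> * of_real \<theta>))) has_vector_derivative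
     ((of_real \<theta> + of_real r) * (w \<theta> * (- \<kappa> * exp (- \<kappa> * of_real \<theta>)) + (\<nu> * w \<theta> + a * exp (l1 * of_real \<theta>) + b * exp (l2 * of_real \<theta>)) * exp (- \<kappa> * of_real \<theta>))
      + 1 * (w \<theta> * exp (- \<kappa> * of_real \<theta>))))
     (at \<theta> within {-r..0})" if "\<theta> \<in> {-r..0}" for \<theta>
    using d that by (intro has_vector_derivative_mult hvd_exp hvd_ofreal) auto
  from fundamental_theorem_of_calculus[OF _ this]
  have 1: "((\<lambda>\<theta>. (of_real \<theta> + of_real r) * (w \<theta> * (- \<kappa> * exp (- \<kappa> * of_real \<theta>)) + (\<nu> * w \<theta> + a * exp (l1 * of_real \<theta>) + b * exp (l2 * of_real \<theta>)) * exp (- \<kappa> * of_real \<theta>))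
      + 1 * (w \<theta> * exp (- \<kappa> * of_real \<theta>)))
     has_integral ((of_real 0 + of_real r) * (w 0 * exp (- \<kappa> * of_real 0)) - (of_real (-r) + of_real r) * (w (-r) * exp (- \<kappa> * of_real (-r))))) {-r..0}"
    using r by simp
  have eq: "(\<lambda>\<theta>. (of_real \<theta> + of_real r) * (w \<theta> * (- \<kappa> * exp (- \<kappa> * of_real \<theta>)) + (\<nu> * w \<theta> + a * exp (l1 * of_real \<theta>) + b * exp (l2 * of_real \<theta>)) * exp (- \<kappa> * of_real \<theta>))
      + 1 * (w \<theta> * exp (- \<kappa> * of_real \<theta>)))
     = (\<lambda>\<theta>. (\<nu> - \<kappa>) * ((of_real \<theta> + of_real r) * (w \<theta> * exp (- \<kappa> * of_real \<theta>))) + w \<theta> * exp (- \<kappa> * of_real \<theta>)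
        + a * ((of_real \<theta> + of_real r) * exp ((l1 - \<kappa>) * of_real \<theta>)) + b * ((of_real \<theta> + of_real r) * exp ((l2 - \<kappa>) * of_real \<theta>)))"
  proof (rule ext)
    fix t :: real
    have e: "exp (l * of_real t) * exp (- \<kappa> * of_real t) = exp ((l - \<kappa>) * of_real t)" for l
      by (simp add: exp_add[symmetric] left_diff_distrib)
    let ?T = "of_real t + of_real r :: complex"
    have "?T * (w t * (- \<kappa> * exp (- \<kappa> * of_real t)) + (\<nu> * w t + a * exp (l1 * of_real t) + b * exp (l2 * of_real t)) * exp (- \<kappa> * of_real t))
      + 1 * (w t * exp (- \<kappa> * of_real t))
      = (\<nu> - \<kappa>) * (?T * (w t * exp (- \<kappa> * of_real t))) + w t * exp (- \<kappa> * of_real t)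
        + a * (?T * (exp (l1 * of_real t) * exp (- \<kappa> * of_real t))) + b * (?T * (exp (l2 * of_real t) * exp (- \<kappa> * of_real t)))"
      by (simp only: ring_distribs mult.assoc mult.left_commute) (simp add: algebra_simps)
    then show "?T * (w t * (- \<kappa> * exp (- \<kappa> * of_real t)) + (\<nu> * w t + a * exp (l1 * of_real t) + b * exp (l2 * of_real t)) * exp (- \<kappa> * of_real t))
      + 1 * (w t * exp (- \<kappa> * of_real t))
      = (\<nu> - \<kappa>) * (?T * (w t * exp (- \<kappa> * of_real t))) + w t * exp (- \<kappa> * of_real t)
        + a * (?T * exp ((l1 - \<kappa>) * of_real t)) + b * (?T * exp ((l2 - \<kappa>) * of_real t))"
      by (simp only: e)
  qed
  have 2: "((\<lambda>\<theta>. (\<nu> - \<kappa>) * ((of_real \<theta> + of_real r) * (w \<theta> * exp (- \<kappa> * of_real \<theta>))) + w \<theta> * exp (- \<kappa> * of_real \<theta>)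
        + a * ((of_real \<theta> + of_real r) * exp ((l1 - \<kappa>) * of_real \<theta>)) + b * ((of_real \<theta> + of_real r) * exp ((l2 - \<kappa>) * of_real \<theta>)))
     has_integral ((\<nu> - \<kappa>) * ?M + ?I + a * Lf r (l1 - \<kappa>) + b * Lf r (l2 - \<kappa>))) {-r..0}"
    by (intro has_integral_add has_integral_mult_right Iint Mint Lf_int)
  from 2 have 3: "((\<lambda>\<theta>. (of_real \<theta> + of_real r) * (w \<theta> * (- \<kappa> * exp (- \<kappa> * of_real \<theta>)) + (\<nu> * w \<theta> + a * exp (l1 * of_real \<theta>) + b * exp (l2 * of_real \<theta>)) * exp (- \<kappa> * of_real \<theta>))
      + 1 * (w \<theta> * exp (- \<kappa> * of_real \<theta>)))
     has_integral ((\<nu> - \<kappa>) * ?M + ?I + a * Lf r (l1 - \<kappa>) + b * Lf r (l2 - \<kappa>))) {-r..0}"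
    unfolding eq .
  from has_integral_unique[OF 1 3]
  have "(of_real 0 + of_real r) * (w 0 * exp (- \<kappa> * of_real 0)) - (of_real (-r) + of_real r) * (w (-r) * exp (- \<kappa> * of_real (-r)))
     = (\<nu> - \<kappa>) * ?M + ?I + a * Lf r (l1 - \<kappa>) + b * Lf r (l2 - \<kappa>)" .
  then show ?thesis by (simp add: algebra_simps)
qed

lemma Lf_closed: assumes "r \<ge> 0" "s \<noteq> 0" shows "Lf r s = of_real r / s - (1 - exp (- s * of_real r)) / s^2"
proof -
  have "((\<lambda>\<theta>. (of_real \<theta> + of_real r) * exp (s * of_real \<theta>)) has_integral
      (((of_real 0 + of_real r) * exp (s * of_real 0) / s - exp (s * of_real 0) / s^2)
      - ((of_real (-r) + of_real r) * exp (s * of_real (-r)) / s - exp (s * of_real (-r)) / s^2))) {-r..0}"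
  proof (rule fundamental_theorem_of_calculus)
    show "- r \<le> 0" using assms by simp
    fix t :: real assume "t \<in> {-r..0}"
    have "((\<lambda>\<theta>. (of_real \<theta> + of_real r) * exp (s * of_real \<theta>) / s - exp (s * of_real \<theta>) / s^2) has_vector_derivative
       ((of_real t + of_real r) * (s * exp (s * of_real t)) + 1 * exp (s * of_real t)) / s - (s * exp (s * of_real t)) / s^2) (at t within {-r..0})"
      by (intro has_vector_derivative_diff has_vector_derivative_divide has_vector_derivative_mult hvd_exp hvd_ofreal)
    moreover have "((of_real t + of_real r) * (s * exp (s * of_real t)) + 1 * exp (s * of_real t)) / s - (s * exp (s * of_real t)) / s^2
       = (of_real t + of_real r) * exp (s * of_real t)"
      using assms by (simp add: field_simps power2_eq_square)
    ultimately show "((\<lambda>\<theta>. (of_real \<theta> + of_real r) * exp (s * of_real \<theta>) / s - exp (s * of_real \<theta>) / s^2) has_vector_derivative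
       (of_real t + of_real r) * exp (s * of_real t)) (at t within {-r..0})" by simp
  qed
  from has_integral_unique[OF Lf_int this] show ?thesis using assms by (simp add: field_simps)
qed

lemma Lf_zero: assumes "r \<ge> 0" shows "Lf r 0 = of_real r ^ 2 / 2"
proof -
  have "((\<lambda>\<theta>. (of_real \<theta> + of_real r) * exp (0 * of_real \<theta>)) has_integral
      ((of_real 0 + of_real r) * (of_real 0 + of_real r) / 2 - (of_real (-r) + of_real r :: complex) * (of_real (-r) + of_real r)/2)) {-r..0}"
  proof (rule fundamental_theorem_of_calculus)
    show "- r \<le> 0" using assms by simp
    fix t :: real assume "t \<in> {-r..0}"
    have D: "((\<lambda>\<theta>. (of_real \<theta> + of_real r :: complex) * (of_real \<theta> + of_real r) / 2) has_vector_derivative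
      ((of_real t + of_real r) * 1 + 1 * (of_real t + of_real r)) / 2) (at t within {-r..0})"
      by (intro has_vector_derivative_divide has_vector_derivative_mult hvd_ofreal)
    have X: "((of_real t + of_real r) * 1 + 1 * (of_real t + of_real r)) / 2 = (of_real t + of_real r :: complex) * exp (0 * of_real t)"
      by (simp add: field_simps)
    show "((\<lambda>\<theta>. (of_real \<theta> + of_real r :: complex) * (of_real \<theta> + of_real r) / 2) has_vector_derivative (of_real t + of_real r) * exp (0 * of_real t)) (at t within {-r..0})"
      by (rule D[unfolded X])
  qed
  from has_integral_unique[OF Lf_int this] show ?thesis by (simp add: power2_eq_square)
qed

lemma T_lemma:
  fixes w :: "real \<Rightarrow> complex"
  assumes r: "r > 0"
    and d: "\<forall>\<theta>\<in>{-r..0}. (w has_vector_derivative (\<nu> * w \<theta> + a * exp (l1 * of_real \<theta>) + b * exp (l2 * of_real \<theta>))) (at \<theta> within {-r..0})"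
    and bnd: "\<nu> * w 0 + a + b = of_real A * w 0 + of_real B * w (-r) + f"
    and ne: "\<kappa> \<noteq> \<nu>"
  shows "w 0 + of_real B * exp (- \<kappa> * of_real r) * integral {-r..0} (\<lambda>\<theta>. w \<theta> * exp (- \<kappa> * of_real \<theta>))
    = (charfun A B r \<kappa> * w 0 + a * (1 + of_real B * exp (- \<kappa> * of_real r) * Kf r (l1 - \<kappa>))
       + b * (1 + of_real B * exp (- \<kappa> * of_real r) * Kf r (l2 - \<kappa>)) - f) / (\<kappa> - \<nu>)"
proof -
  let ?I = "integral {-r..0} (\<lambda>\<theta>. w \<theta> * exp (- \<kappa> * of_real \<theta>))"
  let ?E = "exp (- \<kappa> * of_real r)"
  have 1: "(\<kappa> - \<nu>) * ?I = w (-r) * exp (\<kappa> * of_real r) - w 0 + a * Kf r (l1 - \<kappa>) + b * Kf r (l2 - \<kappa>)"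
    by (rule ode_int[OF r d])
  have E: "?E * exp (\<kappa> * of_real r) = 1" by (simp add: exp_minus field_simps)
  have "(\<kappa> - \<nu>) * (of_real B * ?E * ?I) = of_real B * w (-r) * (?E * exp (\<kappa> * of_real r)) - of_real B * ?E * w 0
       + of_real B * ?E * (a * Kf r (l1 - \<kappa>) + b * Kf r (l2 - \<kappa>))"
  proof -
    have "(\<kappa> - \<nu>) * (of_real B * ?E * ?I) = of_real B * ?E * ((\<kappa> - \<nu>) * ?I)" by (simp only: mult_ac)
    also have "\<dots> = of_real B * ?E * (w (-r) * exp (\<kappa> * of_real r) - w 0 + a * Kf r (l1 - \<kappa>) + b * Kf r (l2 - \<kappa>))"
      by (simp only: 1)
    finally show ?thesis by (simp add: algebra_simps)
  qed
  also have "\<dots> = (\<nu> - of_real A) * w 0 + a + b - f - of_real B * ?E * w 0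
       + of_real B * ?E * (a * Kf r (l1 - \<kappa>) + b * Kf r (l2 - \<kappa>))"
  proof -
    have E2: "exp (\<kappa> * of_real r) * exp (-(\<kappa> * of_real r)) = 1" by (simp add: exp_minus)
    show ?thesis using bnd by (simp add: E E2 algebra_simps)
  qed
  finally have 2: "(\<kappa> - \<nu>) * (of_real B * ?E * ?I) = (\<nu> - of_real A) * w 0 + a + b - f - of_real B * ?E * w 0
       + of_real B * ?E * (a * Kf r (l1 - \<kappa>) + b * Kf r (l2 - \<kappa>))" .
  have "(\<kappa> - \<nu>) * (w 0 + of_real B * ?E * ?I) = charfun A B r \<kappa> * w 0 + a * (1 + of_real B * ?E * Kf r (l1 - \<kappa>))
       + b * (1 + of_real B * ?E * Kf r (l2 - \<kappa>)) - f"
    by (simp only: distrib_left 2) (simp add: charfun_def algebra_simps)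
  then show ?thesis using ne by (simp add: field_simps)
qed

lemma end_lemma:
  fixes w :: "real \<Rightarrow> complex"
  assumes r: "r > 0"
    and d: "\<forall>\<theta>\<in>{-r..0}. (w has_vector_derivative (\<nu> * w \<theta> + a * exp (l1 * of_real \<theta>) + b * exp (l2 * of_real \<theta>))) (at \<theta> within {-r..0})"
  shows "w (-r) = exp (- \<nu> * of_real r) * (w 0 - a * Kf r (l1 - \<nu>) - b * Kf r (l2 - \<nu>))"
proof -
  have "(\<nu> - \<nu>) * integral {-r..0} (\<lambda>\<theta>. w \<theta> * exp (- \<nu> * of_real \<theta>)) = w (-r) * exp (\<nu> * of_real r) - w 0 + a * Kf r (l1 - \<nu>) + b * Kf r (l2 - \<nu>)"
    by (rule ode_int[OF r d])
  then have "w (-r) * exp (\<nu> * of_real r) = w 0 - a * Kf r (l1 - \<nu>) - b * Kf r (l2 - \<nu>)" by (simp add: algebra_simps)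
  then have "w (-r) * exp (\<nu> * of_real r) * exp (- \<nu> * of_real r) = exp (- \<nu> * of_real r) * (w 0 - a * Kf r (l1 - \<nu>) - b * Kf r (l2 - \<nu>))"
    by simp
  then show ?thesis by (simp add: exp_minus field_simps)
qed

lemma w0_lemma:
  fixes w :: "real \<Rightarrow> complex"
  assumes r: "r > 0"
    and d: "\<forall>\<theta>\<in>{-r..0}. (w has_vector_derivative (\<nu> * w \<theta> + a * exp (l1 * of_real \<theta>) + b * exp (l2 * of_real \<theta>))) (at \<theta> within {-r..0})"
    and bnd: "\<nu> * w 0 + a + b = of_real A * w 0 + of_real B * w (-r) + f"
    and ne: "charfun A B r \<nu> \<noteq> 0"
  shows "w 0 = (f - a - b - of_real B * exp (- \<nu> * of_real r) * (a * Kf r (l1 - \<nu>) + b * Kf r (l2 - \<nu>))) / charfun A B r \<nu>"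
proof -
  have e: "w (-r) = exp (- \<nu> * of_real r) * (w 0 - a * Kf r (l1 - \<nu>) - b * Kf r (l2 - \<nu>))"
    by (rule end_lemma[OF r d])
  have "charfun A B r \<nu> * w 0 = f - a - b - of_real B * exp (- \<nu> * of_real r) * (a * Kf r (l1 - \<nu>) + b * Kf r (l2 - \<nu>))"
    using bnd unfolding e charfun_def by (simp add: algebra_simps)
  then show ?thesis using ne by (simp add: field_simps)
qed

lemma so_parts:
  assumes "second_order A B r lam C w20 w11 w02"
  defines "f \<equiv> fcoef C r lam w20 w11 w02" and "g \<equiv> gcoef A C r lam w20 w11 w02"
  shows "\<forall>\<theta>\<in>{-r..0}. (w20 has_vector_derivative (2 * lam * w20 \<theta> + g 2 0 * exp (lam * of_real \<theta>) + cnj (g 0 2) * exp (cnj lam * of_real \<theta>))) (at \<theta> within {-r..0})"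
    and "2 * lam * w20 0 + g 2 0 + cnj (g 0 2) = of_real A * w20 0 + of_real B * w20 (-r) + f 2 0"
    and "\<forall>\<theta>\<in>{-r..0}. (w11 has_vector_derivative ((lam + cnj lam) * w11 \<theta> + g 1 1 * exp (lam * of_real \<theta>) + cnj (g 1 1) * exp (cnj lam * of_real \<theta>))) (at \<theta> within {-r..0})"
    and "(lam + cnj lam) * w11 0 + g 1 1 + cnj (g 1 1) = of_real A * w11 0 + of_real B * w11 (-r) + f 1 1"
    and "\<forall>\<theta>\<in>{-r..0}. (w02 has_vector_derivative (2 * cnj lam * w02 \<theta> + g 0 2 * exp (lam * of_real \<theta>) + cnj (g 2 0) * exp (cnj lam * of_real \<theta>))) (at \<theta> within {-r..0})"
    and "2 * cnj lam * w02 0 + g 0 2 + cnj (g 2 0) = of_real A * w02 0 + of_real B * w02 (-r) + f 0 2"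
  using assms(1) unfolding second_order_def inv_eq_def Let_def f_def g_def by simp_all

definition Sx :: "complex \<Rightarrow> complex \<Rightarrow> (nat \<Rightarrow> nat \<Rightarrow> complex) \<Rightarrow> (nat \<Rightarrow> nat \<Rightarrow> complex) \<Rightarrow> complex" where
  "Sx lam k f g = f 2 1 + 2 * g 1 1 * f 2 0 / (k - 2 * lam) + (g 2 0 + 2 * cnj (g 1 1)) * f 1 1 / (k - (lam + cnj lam))
     + cnj (g 0 2) * f 0 2 / (k - 2 * cnj lam)"

definition Qx :: "complex \<Rightarrow> complex \<Rightarrow> (nat \<Rightarrow> nat \<Rightarrow> complex) \<Rightarrow> complex \<Rightarrow> complex \<Rightarrow> complex \<Rightarrow> complex" where
  "Qx lam k g a b c = (cnj (g 1 2) + 2 * g 1 1 * cnj (g 0 2) / (k - 2 * lam) + (g 2 0 + 2 * cnj (g 1 1)) * cnj (g 1 1) / (k - (lam + cnj lam))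
     + cnj (g 0 2) * cnj (g 2 0) / (k - 2 * cnj lam)) / (2 * lam)
     + 2 * g 1 1 * a / (k - 2 * lam) + (g 2 0 + 2 * cnj (g 1 1)) * b / (k - (lam + cnj lam)) + cnj (g 0 2) * c / (k - 2 * cnj lam)"

lemma alg_key:
  fixes N D m l H1 H2 T1 T2 T3 d1 d2 d3 g21 gb12 f21 Psi c1 c2 c3 f1 f2 f3 a1 a2 a3 b1 b2 b3 w1 w2 w3 :: complex
  assumes "H1 = D / m" "H2 = D / (2 * l)" "m \<noteq> 0" "l \<noteq> 0" "D \<noteq> 0" "d1 \<noteq> 0" "d2 \<noteq> 0" "d3 \<noteq> 0"
    "T1 = (D * w1 + a1 * H1 + b1 * H2 - f1) / d1"
    "T2 = (D * w2 + a2 * H1 + b2 * H2 - f2) / d2"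
    "T3 = (D * w3 + a3 * H1 + b3 * H2 - f3) / d3"
    "N = - g21 * H1 - gb12 * H2 + f21 - c1 * T1 - c2 * T2 - c3 * T3"
    "g21 = Psi * f21" "a1 = Psi * f1" "a2 = Psi * f2" "a3 = Psi * f3"
  shows "N / D = (f21 + c1 * f1 / d1 + c2 * f2 / d2 + c3 * f3 / d3) * (1 / D - Psi / m)
     - ((gb12 + c1 * b1 / d1 + c2 * b2 / d2 + c3 * b3 / d3) / (2 * l) + c1 * w1 / d1 + c2 * w2 / d2 + c3 * w3 / d3)"
  unfolding assms(12) assms(9-11) assms(13-16)
  using assms(3-8) unfolding assms(1,2) by (simp add: field_simps)

lemma cnj_charfun: "cnj (charfun A B r z) = charfun A B r (cnj z)"
  by (simp add: charfun_def exp_cnj)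

lemma key:
  assumes r: "r > 0" and so: "second_order A B r lam C w20 w11 w02" and ch: "charfun A B r lam = 0"
    and m0: "lam + cnj lam \<noteq> 0" and l0: "lam \<noteq> 0" and d3: "2 * lam \<noteq> cnj lam"
    and D0: "Delta A B r lam \<noteq> 0"
  defines "f \<equiv> fcoef C r lam w20 w11 w02" and "g \<equiv> gcoef A C r lam w20 w11 w02"
  shows "(of_real B * R1 A C r lam w20 w11 w02 - R2 A C r lam w20 w11 w02) / Delta A B r lam
    = Sx lam (kappa lam) f g * (1 / Delta A B r lam - Psi0 A r lam / (lam + cnj lam))
      - Qx lam (kappa lam) g (w20 0) (w11 0) (w02 0)"
proof -
  define k where "k = kappa lam"
  define E where "E = exp (- k * of_real r)"
  define m where "m = lam + cnj lam"
  define D where "D = Delta A B r lam"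
  have k: "k = 2 * lam + cnj lam" by (simp add: k_def kappa_def)
  note P = so_parts[OF so, folded f_def g_def]
  let ?I = "\<lambda>w. integral {-r..0} (\<lambda>\<theta>. w \<theta> * exp (- k * of_real \<theta>))"
  have T1: "w20 0 + of_real B * E * ?I w20 = (charfun A B r k * w20 0 + g 2 0 * (1 + of_real B * E * Kf r (lam - k))
       + cnj (g 0 2) * (1 + of_real B * E * Kf r (cnj lam - k)) - f 2 0) / (k - 2 * lam)"
    unfolding E_def by (rule T_lemma[OF r P(1) P(2)]) (use l0 in \<open>auto simp: k\<close>)
  have T2: "w11 0 + of_real B * E * ?I w11 = (charfun A B r k * w11 0 + g 1 1 * (1 + of_real B * E * Kf r (lam - k))
       + cnj (g 1 1) * (1 + of_real B * E * Kf r (cnj lam - k)) - f 1 1) / (k - (lam + cnj lam))"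
    unfolding E_def by (rule T_lemma[OF r P(3) P(4)]) (use l0 in \<open>auto simp: k\<close>)
  have T3: "w02 0 + of_real B * E * ?I w02 = (charfun A B r k * w02 0 + g 0 2 * (1 + of_real B * E * Kf r (lam - k))
       + cnj (g 2 0) * (1 + of_real B * E * Kf r (cnj lam - k)) - f 0 2) / (k - 2 * cnj lam)"
    unfolding E_def by (rule T_lemma[OF r P(5) P(6)]) (use d3 in \<open>auto simp: k\<close>)
  have chk: "charfun A B r k = D" by (simp add: D_def Delta_def charfun_def k_def algebra_simps)
  have BP: "of_real B * exp (- lam * of_real r) = lam - of_real A" using ch by (simp add: charfun_def)
  have BPb: "of_real B * exp (- cnj lam * of_real r) = cnj lam - of_real A"
    using ch cnj_charfun[of A B r lam] by (simp add: charfun_def)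
  have EP: "E * exp (m * of_real r) = exp (- lam * of_real r)"
    unfolding E_def m_def k exp_add[symmetric] by (rule arg_cong[where f=exp]) (simp add: algebra_simps)
  have EPb: "E * exp (2 * lam * of_real r) = exp (- cnj lam * of_real r)"
    unfolding E_def k exp_add[symmetric] by (rule arg_cong[where f=exp]) (simp add: algebra_simps)
  have mne: "m \<noteq> 0" using m0 by (simp add: m_def)
  have K1: "of_real B * E * Kf r (lam - k) = of_real B * (exp (- lam * of_real r) - E) / m"
  proof -
    have lk: "lam - k = - m" by (simp add: k m_def)
    have "Kf r (lam - k) = (1 - exp (- (- m) * of_real r)) / (- m)"
      unfolding lk by (rule Kf_closed) (use r mne in auto)
    then have "Kf r (lam - k) = (1 - exp (m * of_real r)) / (- m)" by simp
    then have h: "exp (m * of_real r) = 1 + m * Kf r (lam - k)" using mne by (simp add: field_simps)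
    show ?thesis using mne unfolding EP[symmetric] h by (simp add: field_simps)
  qed
  have K2: "of_real B * E * Kf r (cnj lam - k) = of_real B * (exp (- cnj lam * of_real r) - E) / (2 * lam)"
  proof -
    have lk: "cnj lam - k = - (2 * lam)" by (simp add: k)
    have "Kf r (cnj lam - k) = (1 - exp (- (- (2 * lam)) * of_real r)) / (- (2 * lam))"
      unfolding lk by (rule Kf_closed) (use r l0 in auto)
    then have "Kf r (cnj lam - k) = (1 - exp (2 * lam * of_real r)) / (- (2 * lam))" by simp
    then have h: "exp (2 * lam * of_real r) = 1 + 2 * lam * Kf r (cnj lam - k)" using l0 by (simp add: field_simps)
    show ?thesis using l0 unfolding EPb[symmetric] h by (simp add: field_simps)
  qed
  have H1: "1 + of_real B * E * Kf r (lam - k) = D / m"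
    unfolding K1 using m0 BP by (simp add: D_def Delta_def k_def kappa_def m_def E_def field_simps)
  have H2: "1 + of_real B * E * Kf r (cnj lam - k) = D / (2 * lam)"
    unfolding K2 using l0 BPb by (simp add: D_def Delta_def k_def kappa_def E_def field_simps)
  have N: "of_real B * R1 A C r lam w20 w11 w02 - R2 A C r lam w20 w11 w02
     = - g 2 1 * (1 + of_real B * E * Kf r (lam - k)) - cnj (g 1 2) * (1 + of_real B * E * Kf r (cnj lam - k)) + f 2 1
       - 2 * g 1 1 * (w20 0 + of_real B * E * ?I w20) - (g 2 0 + 2 * cnj (g 1 1)) * (w11 0 + of_real B * E * ?I w11)
       - cnj (g 0 2) * (w02 0 + of_real B * E * ?I w02)"
    unfolding K1 K2 R1_def R2_def Let_def f_def[symmetric] g_def[symmetric] k_def[symmetric] E_def[symmetric] m_def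
    by (simp add: algebra_simps; simp add: add_divide_distrib[symmetric])
  show ?thesis
    unfolding D_def[symmetric] k_def[symmetric] m_def[symmetric] Sx_def Qx_def
  proof (rule alg_key[OF H1 H2 _ l0 _ _ _ _ T1[unfolded chk] T2[unfolded chk, folded m_def] T3[unfolded chk] N])
    show "g 2 1 = Psi0 A r lam * f 2 1" "g 2 0 = Psi0 A r lam * f 2 0" "g 1 1 = Psi0 A r lam * f 1 1" "g 0 2 = Psi0 A r lam * f 0 2"
      by (simp_all add: g_def f_def gcoef_def)
    show "m \<noteq> 0" "D \<noteq> 0" using m0 D0 by (simp_all add: m_def D_def)
    show "k - 2 * lam \<noteq> 0" "k - m \<noteq> 0" "k - 2 * cnj lam \<noteq> 0"
      using l0 d3 by (auto simp: k m_def)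
  qed
qed

definition psi :: "real \<Rightarrow> real" where "psi x = (1 - exp (- x)) / x"
definition phi :: "real \<Rightarrow> real" where "phi x = (exp (- x) - 1 + x) / x^2"

lemma psi_lim: "(psi \<longlongrightarrow> 1) (at_right 0)"
  unfolding psi_def by real_asymp
lemma phi_lim: "(phi \<longlongrightarrow> 1/2) (at_right 0)"
  unfolding phi_def by real_asymp

lemma Psi0_eq:
  assumes "1 + (lam - of_real A) * of_real r \<noteq> 0"
  shows "Psi0 A r lam = 1 / (1 + (lam - of_real A) * of_real r)"
proof -
  define z where "z = 1 + (lam - of_real A) * of_real r"
  have z0: "z \<noteq> 0" using assms by (simp add: z_def)
  have 1: "complex_of_real ((1 - A * r + Re lam * r)\<^sup>2 + (Im lam)\<^sup>2 * r\<^sup>2) = z * cnj z"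
    by (simp add: z_def complex_eq_iff power2_eq_square algebra_simps)
  have 2: "1 + (cnj lam - of_real A) * of_real r = cnj z" by (simp add: z_def)
  have "Psi0 A r lam = cnj z / (z * cnj z)" unfolding Psi0_def 1 2 ..
  also have "\<dots> = 1 / z" using z0 by (simp add: field_simps)
  finally show ?thesis by (simp add: z_def)
qed

lemma Delta_eq:
  assumes r: "r > 0" and ch: "charfun A B r lam = 0" and mu: "Re lam > 0"
  shows "Delta A B r lam = of_real (2 * Re lam) * (1 + of_real B * exp (- lam * of_real r) * of_real r * of_real (psi (2 * Re lam * r)))"
proof -
  define x where "x = 2 * Re lam * r"
  have x0: "x > 0" using r mu by (simp add: x_def)
  have BP: "of_real B * exp (- lam * of_real r) = lam - of_real A" using ch by (simp add: charfun_def)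
  have k: "kappa lam = lam + of_real (2 * Re lam)" by (simp add: kappa_def complex_eq_iff)
  have E: "exp (- kappa lam * of_real r) = exp (- lam * of_real r) * of_real (exp (- x))"
    unfolding k exp_of_real[symmetric] exp_add[symmetric] x_def
    by (rule arg_cong[where f=exp]) (simp add: algebra_simps)
  have ps: "of_real (psi x) * of_real x = (1 - of_real (exp (- x)) :: complex)"
  proof -
    have "psi x * x = 1 - exp (- x)" using x0 by (simp add: psi_def)
    then have "complex_of_real (psi x * x) = of_real (1 - exp (- x))" by simp
    then show ?thesis by simp
  qed
  have "Delta A B r lam = of_real (2 * Re lam) + of_real B * exp (- lam * of_real r) * (1 - of_real (exp (- x)))"
    unfolding Delta_def E using BP by (simp add: k algebra_simps)
  also have "\<dots> = of_real (2 * Re lam) * (1 + of_real B * exp (- lam * of_real r) * of_real r * of_real (psi x))"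
    unfolding ps[symmetric] by (simp add: x_def algebra_simps)
  finally show ?thesis by (simp add: x_def)
qed

lemma phi_psi: "x \<noteq> 0 \<Longrightarrow> phi x * x = 1 - psi x"
  by (simp add: phi_def psi_def field_simps power2_eq_square)

lemma Phi_eq:
  assumes r: "r > 0" and ch: "charfun A B r lam = 0" and mu: "Re lam > 0"
    and hz: "1 + of_real B * exp (- lam * of_real r) * of_real r \<noteq> 0"
    and hq: "1 + of_real B * exp (- lam * of_real r) * of_real r * of_real (psi (2 * Re lam * r)) \<noteq> 0"
  shows "1 / Delta A B r lam - Psi0 A r lam / (lam + cnj lam)
    = of_real B * exp (- lam * of_real r) * of_real r ^ 2 * of_real (phi (2 * Re lam * r))
      / ((1 + of_real B * exp (- lam * of_real r) * of_real r) * (1 + of_real B * exp (- lam * of_real r) * of_real r * of_real (psi (2 * Re lam * r))))"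
proof -
  define x where "x = 2 * Re lam * r"
  define M where "M = 2 * Re lam"
  define P where "P = exp (- lam * of_real r)"
  have M0: "M > 0" using mu by (simp add: M_def)
  have x: "x = M * r" by (simp add: x_def M_def)
  have x0: "x \<noteq> 0" using M0 r by (simp add: x)
  have BP: "of_real B * P = lam - of_real A" using ch by (simp add: charfun_def P_def)
  have Ps: "Psi0 A r lam = 1 / (1 + of_real B * P * of_real r)"
    using Psi0_eq[of lam A r] hz unfolding BP[symmetric] P_def by simp
  have D: "Delta A B r lam = of_real M * (1 + of_real B * P * of_real r * of_real (psi x))"
    using Delta_eq[OF r ch mu] by (simp add: M_def P_def x_def)
  have m: "lam + cnj lam = of_real M" by (simp add: M_def complex_eq_iff)
  have pp: "of_real (phi x) * of_real M * of_real r = (1 - of_real (psi x) :: complex)"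
  proof -
    have "phi x * M * r = 1 - psi x" using phi_psi[OF x0] by (simp add: x mult.assoc)
    then have "complex_of_real (phi x * M * r) = of_real (1 - psi x)" by simp
    then show ?thesis by simp
  qed
  have hz': "1 + of_real B * P * of_real r \<noteq> 0" using hz by (simp add: P_def)
  have hq': "1 + of_real B * P * of_real r * of_real (psi x) \<noteq> 0" using hq by (simp add: P_def x_def)
  have "1 / Delta A B r lam - Psi0 A r lam / (lam + cnj lam)
     = of_real B * P * of_real r * (1 - of_real (psi x)) / (of_real M * (1 + of_real B * P * of_real r) * (1 + of_real B * P * of_real r * of_real (psi x)))"
  proof -
    have aux: "1 / (M' * q) - (1 / a) / M' = (a - q) / (M' * a * q)" if "M' \<noteq> 0" "a \<noteq> 0" "q \<noteq> 0" for M' a q :: complex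
      using that by (simp add: field_simps)
    have "of_real M \<noteq> (0::complex)" using M0 by simp
    from aux[OF this hz' hq'] show ?thesis unfolding D Ps m by (simp add: algebra_simps)
  qed
  also have "\<dots> = of_real B * P * of_real r ^ 2 * of_real (phi x)
      / ((1 + of_real B * P * of_real r) * (1 + of_real B * P * of_real r * of_real (psi x)))"
  proof -
    have "of_real M \<noteq> (0::complex)" using M0 by simp
    have aux2: "c * s * (p * M' * s) / (M' * a * q) = c * s^2 * p / (a * q)" if "M' \<noteq> 0" for c p M' s a q :: complex
    proof -
      have "c * s * (p * M' * s) / (M' * a * q) = (M' * (c * s^2 * p)) / (M' * (a * q))" by (simp add: ac_simps power2_eq_square)
      also have "\<dots> = (c * s^2 * p) / (a * q)" using that by simp
      finally show ?thesis .
    qed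
    show ?thesis unfolding pp[symmetric] by (rule aux2) (use M0 in simp)
  qed
  finally show ?thesis by (simp add: P_def x_def)
qed

lemma Kf_cnj: assumes "r \<ge> 0" "s \<noteq> 0" shows "cnj (Kf r s) = Kf r (cnj s)"
proof -
  have "cnj s \<noteq> 0" using assms by simp
  then show ?thesis using assms by (simp add: Kf_closed exp_cnj)
qed

lemma cnj_sym:
  fixes w w' :: "real \<Rightarrow> complex"
  assumes r: "r > 0"
    and d: "\<forall>\<theta>\<in>{-r..0}. (w has_vector_derivative (\<nu> * w \<theta> + a * exp (l * of_real \<theta>) + b * exp (cnj l * of_real \<theta>))) (at \<theta> within {-r..0})"
    and bnd: "\<nu> * w 0 + a + b = of_real A * w 0 + of_real B * w (-r) + f"
    and d': "\<forall>\<theta>\<in>{-r..0}. (w' has_vector_derivative (cnj \<nu> * w' \<theta> + cnj b * exp (l * of_real \<theta>) + cnj a * exp (cnj l * of_real \<theta>))) (at \<theta> within {-r..0})"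
    and bnd': "cnj \<nu> * w' 0 + cnj b + cnj a = of_real A * w' 0 + of_real B * w' (-r) + cnj f"
    and ch: "charfun A B r \<nu> \<noteq> 0" and n1: "l - \<nu> \<noteq> 0" and n2: "cnj l - \<nu> \<noteq> 0"
  shows "w' 0 = cnj (w 0)" "w' (-r) = cnj (w (-r))"
proof -
  have ch': "charfun A B r (cnj \<nu>) \<noteq> 0" using ch cnj_charfun[of A B r \<nu>] by (metis complex_cnj_zero_iff)
  have K1: "cnj (Kf r (l - \<nu>)) = Kf r (cnj l - cnj \<nu>)" using Kf_cnj[of r "l - \<nu>"] r n1 by simp
  have K2: "cnj (Kf r (cnj l - \<nu>)) = Kf r (l - cnj \<nu>)" using Kf_cnj[of r "cnj l - \<nu>"] r n2 by simp
  have w0: "w 0 = (f - a - b - of_real B * exp (- \<nu> * of_real r) * (a * Kf r (l - \<nu>) + b * Kf r (cnj l - \<nu>))) / charfun A B r \<nu>"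
    by (rule w0_lemma[OF r d bnd ch])
  have w0': "w' 0 = (cnj f - cnj b - cnj a - of_real B * exp (- cnj \<nu> * of_real r) * (cnj b * Kf r (l - cnj \<nu>) + cnj a * Kf r (cnj l - cnj \<nu>))) / charfun A B r (cnj \<nu>)"
    by (rule w0_lemma[OF r d' bnd' ch'])
  show 1: "w' 0 = cnj (w 0)"
    unfolding w0 w0' by (simp add: cnj_charfun[symmetric] exp_cnj K1 K2 algebra_simps)
  have e: "w (-r) = exp (- \<nu> * of_real r) * (w 0 - a * Kf r (l - \<nu>) - b * Kf r (cnj l - \<nu>))"
    by (rule end_lemma[OF r d])
  have e': "w' (-r) = exp (- cnj \<nu> * of_real r) * (w' 0 - cnj b * Kf r (l - cnj \<nu>) - cnj a * Kf r (cnj l - cnj \<nu>))"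
    by (rule end_lemma[OF r d'])
  show "w' (-r) = cnj (w (-r))"
    unfolding e e' 1 by (simp add: exp_cnj K1 K2 algebra_simps)
qed

lemma pair_lemma:
  fixes w :: "real \<Rightarrow> complex"
  assumes r: "r > 0" and cl: "cnj l = - l" and l0: "l \<noteq> 0"
    and rp: "charfun A B r l = 0" and rn: "charfun A B r (- l) = 0"
    and d: "\<forall>\<theta>\<in>{-r..0}. (w has_vector_derivative (\<nu> * w \<theta> + a * exp (l * of_real \<theta>) + b * exp (cnj l * of_real \<theta>))) (at \<theta> within {-r..0})"
    and bnd: "\<nu> * w 0 + a + b = of_real A * w 0 + of_real B * w (-r) + f"
    and ne: "l \<noteq> \<nu>"
    and af: "a * (1 + of_real B * exp (- l * of_real r) * of_real r) = f"
  shows "pairing B r (\<lambda>\<zeta>. - 2 * of_real \<zeta> * exp (- l * of_real \<zeta>)) w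
    = (2 * (1 + of_real B * exp (- l * of_real r) * of_real r) * w 0
       - a * of_real r ^ 2 * of_real B * exp (- l * of_real r)
       + b * (1 + of_real B * exp (- l * of_real r) * of_real r) / l) / (l - \<nu>)"
proof -
  define E where "E = exp (- l * of_real r)"
  define Eb where "Eb = exp (l * of_real r)"
  define h where "h = 1 + of_real B * E * of_real r"
  define I where "I = integral {-r..0} (\<lambda>\<theta>. w \<theta> * exp (- l * of_real \<theta>))"
  define M where "M = integral {-r..0} (\<lambda>\<theta>. (of_real \<theta> + of_real r) * (w \<theta> * exp (- l * of_real \<theta>)))"
  have BE: "of_real B * E = l - of_real A" using rp by (simp add: charfun_def E_def)
  have BEb: "of_real B * Eb = - l - of_real A" using rn by (simp add: charfun_def Eb_def)
  have E2: "E * exp (2 * l * of_real r) = Eb"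
    unfolding E_def Eb_def exp_add[symmetric] by (rule arg_cong[where f=exp]) (simp add: algebra_simps)
  have l2: "- (2 * l) \<noteq> 0" using l0 by simp
  have Kf2: "Kf r (cnj l - l) = (1 - exp (2 * l * of_real r)) / (- (2 * l))"
    using Kf_closed[OF _ l2, of r] r cl by simp
  have Lf2: "Lf r (cnj l - l) = of_real r / (- (2 * l)) - (1 - exp (2 * l * of_real r)) / (- (2 * l))^2"
    using Lf_closed[OF _ l2, of r] r cl by simp
  have H2: "1 + of_real B * E * Kf r (cnj l - l) = 0"
  proof -
    have "of_real B * E * Kf r (cnj l - l) = (of_real B * E - of_real B * (E * exp (2 * l * of_real r))) / (- (2 * l))"
      unfolding Kf2 by (simp add: algebra_simps)
    also have "\<dots> = -1" unfolding E2 BE BEb using l0 by (simp add: field_simps)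
    finally show ?thesis by simp
  qed
  have BLf: "of_real B * E * Lf r (cnj l - l) = - h / (2 * l)"
  proof -
    have "of_real B * E * Lf r (cnj l - l) = (of_real B * E) * of_real r / (- (2 * l)) - (of_real B * E - of_real B * (E * exp (2 * l * of_real r))) / (- (2 * l))^2"
      unfolding Lf2 by (simp add: algebra_simps diff_divide_distrib)
    also have "\<dots> = - h / (2 * l)" unfolding E2 BE BEb h_def using l0
      by (simp add: field_simps power2_eq_square BE)
    finally show ?thesis .
  qed
  have T: "w 0 + of_real B * E * I = (charfun A B r l * w 0 + a * (1 + of_real B * E * Kf r (l - l))
       + b * (1 + of_real B * E * Kf r (cnj l - l)) - f) / (l - \<nu>)"
    unfolding E_def I_def by (rule T_lemma[OF r d bnd]) (use ne in auto)
  have "w 0 + of_real B * E * I = 0"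
    using T unfolding rp H2 af[symmetric] E_def[symmetric] h_def by (simp add: Kf_zero[OF less_imp_le[OF r]])
  then have BEI: "of_real B * E * I = - w 0" by (simp add: add_eq_0_iff)
  have M: "(l - \<nu>) * M = I - of_real r * w 0 + a * Lf r (l - l) + b * Lf r (cnj l - l)"
    unfolding M_def I_def by (rule ode_int2[OF r d])
  have ig: "(\<lambda>\<zeta>. - 2 * of_real (\<zeta> + r) * exp (- l * of_real (\<zeta> + r)) * w \<zeta>)
      = (\<lambda>\<zeta>. (- 2 * E) * ((of_real \<zeta> + of_real r) * (w \<zeta> * exp (- l * of_real \<zeta>))))"
  proof (rule ext)
    fix z :: real
    have "exp (- l * of_real (z + r)) = E * exp (- l * of_real z)"
      unfolding E_def exp_add[symmetric] by (rule arg_cong[where f=exp]) (simp add: algebra_simps)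
    then show "- 2 * of_real (z + r) * exp (- l * of_real (z + r)) * w z = (- 2 * E) * ((of_real z + of_real r) * (w z * exp (- l * of_real z)))"
      by (simp add: algebra_simps)
  qed
  have pr: "pairing B r (\<lambda>\<zeta>. - 2 * of_real \<zeta> * exp (- l * of_real \<zeta>)) w = - 2 * (of_real B * E * M)"
    unfolding pairing_def ig M_def by simp
  have "(l - \<nu>) * pairing B r (\<lambda>\<zeta>. - 2 * of_real \<zeta> * exp (- l * of_real \<zeta>)) w = - 2 * (of_real B * E * ((l - \<nu>) * M))"
    unfolding pr by (simp add: algebra_simps)
  also have "\<dots> = - 2 * (of_real B * E * I - of_real r * (of_real B * E) * w 0 + a * (of_real B * E) * Lf r 0 + b * (of_real B * E * Lf r (cnj l - l)))"
    unfolding M by (simp add: algebra_simps)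
  also have "\<dots> = 2 * h * w 0 - a * of_real r ^ 2 * (of_real B * E) + b * h / l"
    unfolding BEI BLf Lf_zero[OF less_imp_le[OF r]] h_def using l0 by (simp add: field_simps power2_eq_square)
  finally show ?thesis using ne unfolding E_def h_def by (simp add: field_simps)
qed

lemma P1_lemma:
  assumes r: "r > 0" and cl: "cnj l = - l" and l0: "l \<noteq> 0"
    and rp: "charfun A B r l = 0" and rn: "charfun A B r (- l) = 0"
  shows "pairing B r (\<lambda>\<zeta>. Ps * exp (- l * of_real \<zeta>) + cnj (Ps * exp (- l * of_real \<zeta>))) (\<lambda>s. - 2 * of_real s * exp (l * of_real s))
    = of_real B * exp (- l * of_real r) * of_real r ^ 2 * Ps - cnj Ps * (1 + of_real B * exp (- l * of_real r) * of_real r) / l"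
proof -
  define E where "E = exp (- l * of_real r)"
  define Eb where "Eb = exp (l * of_real r)"
  define h where "h = 1 + of_real B * E * of_real r"
  have BE: "of_real B * E = l - of_real A" using rp by (simp add: charfun_def E_def)
  have BEb: "of_real B * Eb = - l - of_real A" using rn by (simp add: charfun_def Eb_def)
  have E2: "Eb * exp (- (2 * l) * of_real r) = E"
    unfolding E_def Eb_def exp_add[symmetric] by (rule arg_cong[where f=exp]) (simp add: algebra_simps)
  have l2: "2 * l \<noteq> 0" using l0 by simp
  have Kf2: "Kf r (2 * l) = (1 - exp (- (2 * l) * of_real r)) / (2 * l)"
    using Kf_closed[OF _ l2, of r] r by simp
  have Lf2: "Lf r (2 * l) = of_real r / (2 * l) - (1 - exp (- (2 * l) * of_real r)) / (2 * l)^2"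
    using Lf_closed[OF _ l2, of r] r by simp
  have J: "of_real B * Eb * (Lf r (2 * l) - of_real r * Kf r (2 * l)) = h / (2 * l)"
  proof -
    have "of_real B * Eb * (Lf r (2 * l) - of_real r * Kf r (2 * l))
      = (of_real B * Eb) * of_real r / (2 * l) - (of_real B * Eb - of_real B * (Eb * exp (- (2 * l) * of_real r))) / (2 * l)^2
        - of_real r * (of_real B * Eb - of_real B * (Eb * exp (- (2 * l) * of_real r))) / (2 * l)"
      unfolding Lf2 Kf2 by (simp add: algebra_simps diff_divide_distrib)
    also have "\<dots> = h / (2 * l)" unfolding E2 BE BEb h_def using l0
      by (simp add: field_simps power2_eq_square BE)
    finally show ?thesis .
  qed
  have ig: "(\<lambda>\<zeta>. (Ps * exp (- l * of_real (\<zeta> + r)) + cnj (Ps * exp (- l * of_real (\<zeta> + r)))) * (- 2 * of_real \<zeta> * exp (l * of_real \<zeta>)))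
    = (\<lambda>\<zeta>. (- 2 * Ps * E) * ((of_real \<zeta> + of_real r) * exp (0 * of_real \<zeta>)) + (2 * Ps * E * of_real r) * exp (0 * of_real \<zeta>)
        + (- 2 * cnj Ps * Eb) * ((of_real \<zeta> + of_real r) * exp ((2 * l) * of_real \<zeta>)) + (2 * cnj Ps * Eb * of_real r) * exp ((2 * l) * of_real \<zeta>))"
  proof (rule ext)
    fix z :: real
    have e1: "exp (- l * of_real (z + r)) = E * exp (- l * of_real z)"
      unfolding E_def exp_add[symmetric] by (rule arg_cong[where f=exp]) (simp add: algebra_simps)
    have e2: "cnj (exp (- l * of_real (z + r))) = Eb * exp (l * of_real z)"
      unfolding exp_cnj Eb_def exp_add[symmetric] by (rule arg_cong[where f=exp]) (simp add: cl algebra_simps)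
    have e3: "exp (- l * of_real z) * exp (l * of_real z) = 1" by (simp add: exp_minus field_simps)
    have e4: "exp (l * of_real z) * exp (l * of_real z) = exp ((2 * l) * of_real z)"
      unfolding exp_add[symmetric] by (rule arg_cong[where f=exp]) (simp add: algebra_simps)
    have "(Ps * exp (- l * of_real (z + r)) + cnj (Ps * exp (- l * of_real (z + r)))) * (- 2 * of_real z * exp (l * of_real z))
      = - 2 * Ps * E * of_real z * (exp (- l * of_real z) * exp (l * of_real z))
        - 2 * cnj Ps * Eb * of_real z * (exp (l * of_real z) * exp (l * of_real z))"
      by (simp only: complex_cnj_mult e2, simp only: e1, simp add: algebra_simps)
    also have "\<dots> = - 2 * Ps * E * of_real z - 2 * cnj Ps * Eb * of_real z * exp ((2 * l) * of_real z)"
      unfolding e3 e4 by simp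
    finally show "(Ps * exp (- l * of_real (z + r)) + cnj (Ps * exp (- l * of_real (z + r)))) * (- 2 * of_real z * exp (l * of_real z))
      = (- 2 * Ps * E) * ((of_real z + of_real r) * exp (0 * of_real z)) + (2 * Ps * E * of_real r) * exp (0 * of_real z)
        + (- 2 * cnj Ps * Eb) * ((of_real z + of_real r) * exp ((2 * l) * of_real z)) + (2 * cnj Ps * Eb * of_real r) * exp ((2 * l) * of_real z)"
      by (simp add: algebra_simps)
  qed
  have int: "((\<lambda>\<zeta>. (- 2 * Ps * E) * ((of_real \<zeta> + of_real r) * exp (0 * of_real \<zeta>)) + (2 * Ps * E * of_real r) * exp (0 * of_real \<zeta>)
        + (- 2 * cnj Ps * Eb) * ((of_real \<zeta> + of_real r) * exp ((2 * l) * of_real \<zeta>)) + (2 * cnj Ps * Eb * of_real r) * exp ((2 * l) * of_real \<zeta>))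
      has_integral ((- 2 * Ps * E) * Lf r 0 + (2 * Ps * E * of_real r) * Kf r 0 + (- 2 * cnj Ps * Eb) * Lf r (2 * l) + (2 * cnj Ps * Eb * of_real r) * Kf r (2 * l))) {-r..0}"
    by (intro has_integral_add has_integral_mult_right Lf_int Kf_int)
  have "pairing B r (\<lambda>\<zeta>. Ps * exp (- l * of_real \<zeta>) + cnj (Ps * exp (- l * of_real \<zeta>))) (\<lambda>s. - 2 * of_real s * exp (l * of_real s))
     = of_real B * ((- 2 * Ps * E) * Lf r 0 + (2 * Ps * E * of_real r) * Kf r 0 + (- 2 * cnj Ps * Eb) * Lf r (2 * l) + (2 * cnj Ps * Eb * of_real r) * Kf r (2 * l))"
    unfolding pairing_def ig using integral_unique[OF int] by simp
  also have "\<dots> = of_real B * E * of_real r ^ 2 * Ps - 2 * cnj Ps * (of_real B * Eb * (Lf r (2 * l) - of_real r * Kf r (2 * l)))"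
    using r by (simp add: Lf_zero Kf_zero algebra_simps power2_eq_square)
  also have "\<dots> = of_real B * E * of_real r ^ 2 * Ps - cnj Ps * h / l"
    unfolding J using l0 by (simp add: field_simps)
  finally show ?thesis unfolding E_def h_def .
qed

lemma final_alg:
  fixes l h B E r Ps Psb f21 c1 c2 c3 f1 f2 f3 ga gb gc b1 b2 b3 w1 w2 w3 d1 d2 d3 gb12 P1 pr1 pr2 pr3 :: complex
  assumes "l \<noteq> 0" "h \<noteq> 0" "d1 \<noteq> 0" "d2 \<noteq> 0" "d3 \<noteq> 0" "Ps * h = 1" "gb12 = Psb * f21"
    "P1 = B * E * r^2 * Ps - Psb * h / l"
    "pr1 = (2 * h * w1 - ga * r^2 * B * E + b1 * h / l) / d1"
    "pr2 = (2 * h * w2 - gb * r^2 * B * E + b2 * h / l) / d2"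
    "pr3 = (2 * h * w3 - gc * r^2 * B * E + b3 * h / l) / d3"
    "ga = Ps * f1" "gb = Ps * f2" "gc = Ps * f3"
  shows "(f21 + c1 * f1 / d1 + c2 * f2 / d2 + c3 * f3 / d3) * (B * E * r^2 * of_real (1/2) / (h * h))
     - ((gb12 + c1 * b1 / d1 + c2 * b2 / d2 + c3 * b3 / d3) / (2 * l) + c1 * w1 / d1 + c2 * w2 / d2 + c3 * w3 / d3)
     = (f21 * P1 - c1 * pr1 - c2 * pr2 - c3 * pr3) / (2 * h)"
proof -
  have Ps: "Ps = 1 / h" using assms(2,6) by (simp add: field_simps)
  show ?thesis unfolding assms(7-11) assms(12-14) Ps using assms(1-5) by (simp add: field_simps)
qed

lemma cnj_F21: "cnj (F21 C p q a b c a' b' c') = F21 C (cnj p) (cnj q) (cnj a) (cnj b) (cnj c) (cnj a') (cnj b') (cnj c')"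
  by (simp add: F21_def)

lemma unpert_value:
  assumes r: "r > 0" and om: "\<omega> > 0"
    and rp: "charfun A B r (\<i> * of_real \<omega>) = 0" and rn: "charfun A B r (- \<i> * of_real \<omega>) = 0"
    and so: "second_order A B r (\<i> * of_real \<omega>) C w20 w11 w02"
    and c2: "charfun A B r (2 * (\<i> * of_real \<omega>)) \<noteq> 0" and c0: "charfun A B r 0 \<noteq> 0"
  defines "lam0 \<equiv> \<i> * of_real \<omega>"
  defines "f \<equiv> fcoef C r lam0 w20 w11 w02" and "g \<equiv> gcoef A C r lam0 w20 w11 w02"
  defines "E \<equiv> exp (- lam0 * of_real r)"
  defines "h \<equiv> 1 + of_real B * E * of_real r"
  shows "Sx lam0 (kappa lam0) f g * (of_real B * E * of_real r ^ 2 * of_real (1/2) / (h * h))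
     - Qx lam0 (kappa lam0) g (w20 0) (w11 0) (w02 0) = W21 A B C r \<omega> w20 w11 w02"
proof -
  have cl: "cnj lam0 = - lam0" by (simp add: lam0_def)
  have l0: "lam0 \<noteq> 0" using om by (simp add: lam0_def)
  have kap: "kappa lam0 = lam0" by (simp add: kappa_def cl)
  have rp': "charfun A B r lam0 = 0" using rp by (simp add: lam0_def)
  have rn': "charfun A B r (- lam0) = 0" using rn by (simp add: lam0_def)
  have BE: "of_real B * E = lam0 - of_real A" using rp' by (simp add: charfun_def E_def)
  have h: "h = 1 + (lam0 - of_real A) * of_real r" by (simp add: h_def BE)
  have h0: "h \<noteq> 0"
  proof
    assume "h = 0"
    then have "Im h = 0" by simp
    then show False using r om by (simp add: h lam0_def)
  qed
  have Ps: "Psi0 A r lam0 = 1 / h" using Psi0_eq[of lam0 A r] h0 by (simp add: h)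
  have Psh: "Psi0 A r lam0 * h = 1" using Ps h0 by simp
  note P = so_parts[OF so[folded lam0_def], folded f_def g_def]
  have g: "g i j = Psi0 A r lam0 * f i j" for i j by (simp add: g_def f_def gcoef_def)
  have Ec: "cnj E = exp (- cnj lam0 * of_real r)" by (simp add: E_def exp_cnj)
  have f02: "f 0 2 = cnj (f 2 0)" unfolding f_def fcoef_02 fcoef_20 by (simp add: exp_cnj)
  have f11: "cnj (f 1 1) = f 1 1" unfolding f_def fcoef_11 by (simp add: exp_cnj algebra_simps)
  have sym1: "w02 0 = cnj (w20 0) \<and> w02 (-r) = cnj (w20 (-r))"
  proof (intro conjI)
    have d': "\<forall>\<theta>\<in>{-r..0}. (w02 has_vector_derivative (cnj (2 * lam0) * w02 \<theta> + cnj (cnj (g 0 2)) * exp (lam0 * of_real \<theta>) + cnj (g 2 0) * exp (cnj lam0 * of_real \<theta>))) (at \<theta> within {-r..0})"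
      using P(5) by simp
    have b': "cnj (2 * lam0) * w02 0 + cnj (cnj (g 0 2)) + cnj (g 2 0) = of_real A * w02 0 + of_real B * w02 (-r) + cnj (f 2 0)"
      using P(6) f02 by simp
    have ch: "charfun A B r (2 * lam0) \<noteq> 0" using c2 by (simp add: lam0_def)
    have n1: "lam0 - 2 * lam0 \<noteq> 0" "cnj lam0 - 2 * lam0 \<noteq> 0" using l0 by (simp_all add: cl)
    show "w02 0 = cnj (w20 0)" by (rule cnj_sym(1)[OF r P(1) P(2) d' b' ch n1])
    show "w02 (-r) = cnj (w20 (-r))" by (rule cnj_sym(2)[OF r P(1) P(2) d' b' ch n1])
  qed
  have sym2: "w11 0 = cnj (w11 0) \<and> w11 (-r) = cnj (w11 (-r))"
  proof (intro conjI)
    have d': "\<forall>\<theta>\<in>{-r..0}. (w11 has_vector_derivative (cnj (lam0 + cnj lam0) * w11 \<theta> + cnj (cnj (g 1 1)) * exp (lam0 * of_real \<theta>) + cnj (g 1 1) * exp (cnj lam0 * of_real \<theta>))) (at \<theta> within {-r..0})"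
      using P(3) by (simp add: cl)
    have b': "cnj (lam0 + cnj lam0) * w11 0 + cnj (cnj (g 1 1)) + cnj (g 1 1) = of_real A * w11 0 + of_real B * w11 (-r) + cnj (f 1 1)"
      using P(4) f11 by (simp add: cl)
    have ch: "charfun A B r (lam0 + cnj lam0) \<noteq> 0" using c0 by (simp add: cl)
    have n1: "lam0 - (lam0 + cnj lam0) \<noteq> 0" "cnj lam0 - (lam0 + cnj lam0) \<noteq> 0" using l0 by (simp_all add: cl)
    show "w11 0 = cnj (w11 0)" by (rule cnj_sym(1)[OF r P(3) P(4) d' b' ch n1])
    show "w11 (-r) = cnj (w11 (-r))" by (rule cnj_sym(2)[OF r P(3) P(4) d' b' ch n1])
  qed
  have f12: "cnj (f 1 2) = f 2 1"
    unfolding f_def fcoef_12 fcoef_21 cnj_F21 using sym1 sym2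
    by (simp add: exp_cnj)
  have gb12: "cnj (g 1 2) = cnj (Psi0 A r lam0) * f 2 1" unfolding g using f12 by simp
  have pr1: "pairing B r (\<lambda>\<zeta>. - 2 * of_real \<zeta> * exp (- lam0 * of_real \<zeta>)) w20
     = (2 * h * w20 0 - g 2 0 * of_real r ^ 2 * of_real B * E + cnj (g 0 2) * h / lam0) / (lam0 - 2 * lam0)"
    unfolding h_def E_def
    by (rule pair_lemma[OF r cl l0 rp' rn' P(1) P(2)]) (use l0 Psh in \<open>auto simp: g h_def E_def\<close>)
  have pr2: "pairing B r (\<lambda>\<zeta>. - 2 * of_real \<zeta> * exp (- lam0 * of_real \<zeta>)) w11
     = (2 * h * w11 0 - g 1 1 * of_real r ^ 2 * of_real B * E + cnj (g 1 1) * h / lam0) / (lam0 - (lam0 + cnj lam0))"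
    unfolding h_def E_def
    by (rule pair_lemma[OF r cl l0 rp' rn' P(3) P(4)]) (use l0 Psh in \<open>auto simp: g h_def E_def cl\<close>)
  have pr3: "pairing B r (\<lambda>\<zeta>. - 2 * of_real \<zeta> * exp (- lam0 * of_real \<zeta>)) w02
     = (2 * h * w02 0 - g 0 2 * of_real r ^ 2 * of_real B * E + cnj (g 2 0) * h / lam0) / (lam0 - 2 * cnj lam0)"
    unfolding h_def E_def
    by (rule pair_lemma[OF r cl l0 rp' rn' P(5) P(6)]) (use l0 Psh in \<open>auto simp: g h_def E_def cl\<close>)
  have P1: "pairing B r (\<lambda>\<zeta>. Psi0 A r lam0 * exp (- lam0 * of_real \<zeta>) + cnj (Psi0 A r lam0 * exp (- lam0 * of_real \<zeta>))) (\<lambda>s. - 2 * of_real s * exp (lam0 * of_real s))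
    = of_real B * E * of_real r ^ 2 * Psi0 A r lam0 - cnj (Psi0 A r lam0) * h / lam0"
    unfolding h_def E_def by (rule P1_lemma[OF r cl l0 rp' rn'])
  have den: "2 * of_real r * of_real \<omega> * \<i> - 2 * of_real r * of_real A + 2 = 2 * h"
    by (simp add: h lam0_def algebra_simps)
  have W: "W21 A B C r \<omega> w20 w11 w02 = (f 2 1 * pairing B r (\<lambda>\<zeta>. Psi0 A r lam0 * exp (- lam0 * of_real \<zeta>) + cnj (Psi0 A r lam0 * exp (- lam0 * of_real \<zeta>))) (\<lambda>s. - 2 * of_real s * exp (lam0 * of_real s))
        - 2 * g 1 1 * pairing B r (\<lambda>\<zeta>. - 2 * of_real \<zeta> * exp (- lam0 * of_real \<zeta>)) w20
        - (g 2 0 + 2 * cnj (g 1 1)) * pairing B r (\<lambda>\<zeta>. - 2 * of_real \<zeta> * exp (- lam0 * of_real \<zeta>)) w11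
        - cnj (g 0 2) * pairing B r (\<lambda>\<zeta>. - 2 * of_real \<zeta> * exp (- lam0 * of_real \<zeta>)) w02) / (2 * h)"
    unfolding W21_def Let_def den[symmetric] lam0_def f_def g_def ..
  show ?thesis unfolding W P1 pr1 pr2 pr3 Sx_def Qx_def kap
    by (rule final_alg[where ga = "g 2 0" and gb = "g 1 1" and gc = "g 0 2" and Ps = "Psi0 A r lam0" and Psb = "cnj (Psi0 A r lam0)"])
       (use l0 h0 Psh gb12 in \<open>simp_all add: g cl\<close>)
qed

lemma Kf_tendsto:
  assumes "(s \<longlongrightarrow> s0) F" "s0 \<noteq> 0" "r \<ge> 0"
  shows "((\<lambda>e. Kf r (s e)) \<longlongrightarrow> Kf r s0) F"
proof -
  have ev: "eventually (\<lambda>e. s e \<noteq> 0) F" by (rule tendsto_imp_eventually_ne[OF assms(1,2)])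
  have "((\<lambda>e. (1 - exp (- s e * of_real r)) / s e) \<longlongrightarrow> (1 - exp (- s0 * of_real r)) / s0) F"
    using assms by (intro tendsto_intros) auto
  then have "((\<lambda>e. (1 - exp (- s e * of_real r)) / s e) \<longlongrightarrow> Kf r s0) F"
    using Kf_closed[OF assms(3,2)] by simp
  then show ?thesis
    by (rule Lim_transform_eventually) (use ev assms(3) in \<open>auto elim!: eventually_mono simp: Kf_closed\<close>)
qed

lemma charfun_tendsto:
  assumes "(A \<longlongrightarrow> A0) F" "(B \<longlongrightarrow> B0) F" "(z \<longlongrightarrow> z0) F"
  shows "((\<lambda>e. charfun (A e) (B e) r (z e)) \<longlongrightarrow> charfun A0 B0 r z0) F"
  unfolding charfun_def using assms by (intro tendsto_intros)

lemma endpoint_tendsto: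
  fixes w :: "'e \<Rightarrow> real \<Rightarrow> complex" and w0 :: "real \<Rightarrow> complex"
  assumes r: "r > 0"
    and lamT: "(lam \<longlongrightarrow> l) F" and AT: "(Ae \<longlongrightarrow> A) F" and BT: "(Be \<longlongrightarrow> B) F"
    and nuT: "(nu \<longlongrightarrow> nu0) F" and aT: "(a \<longlongrightarrow> a0) F" and bT: "(b \<longlongrightarrow> b0) F" and fT: "(f \<longlongrightarrow> f0) F"
    and nz: "charfun A B r nu0 \<noteq> 0" and n1: "l - nu0 \<noteq> 0" and n2: "cnj l - nu0 \<noteq> 0"
    and ev: "eventually (\<lambda>e. (\<forall>\<theta>\<in>{-r..0}. (w e has_vector_derivative (nu e * w e \<theta> + a e * exp (lam e * of_real \<theta>) + b e * exp (cnj (lam e) * of_real \<theta>))) (at \<theta> within {-r..0}))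
           \<and> nu e * w e 0 + a e + b e = of_real (Ae e) * w e 0 + of_real (Be e) * w e (-r) + f e) F"
    and d0: "\<forall>\<theta>\<in>{-r..0}. (w0 has_vector_derivative (nu0 * w0 \<theta> + a0 * exp (l * of_real \<theta>) + b0 * exp (cnj l * of_real \<theta>))) (at \<theta> within {-r..0})"
    and b0: "nu0 * w0 0 + a0 + b0 = of_real A * w0 0 + of_real B * w0 (-r) + f0"
  shows "((\<lambda>e. w e 0) \<longlongrightarrow> w0 0) F" "((\<lambda>e. w e (-r)) \<longlongrightarrow> w0 (-r)) F"
proof -
  have r0: "r \<ge> 0" using r by simp
  have chT: "((\<lambda>e. charfun (Ae e) (Be e) r (nu e)) \<longlongrightarrow> charfun A B r nu0) F"
    by (rule charfun_tendsto[OF AT BT nuT])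
  have evc: "eventually (\<lambda>e. charfun (Ae e) (Be e) r (nu e) \<noteq> 0) F"
    by (rule tendsto_imp_eventually_ne[OF chT nz])
  have K1: "((\<lambda>e. Kf r (lam e - nu e)) \<longlongrightarrow> Kf r (l - nu0)) F"
    by (rule Kf_tendsto[OF _ n1 r0]) (intro tendsto_intros lamT nuT)
  have K2: "((\<lambda>e. Kf r (cnj (lam e) - nu e)) \<longlongrightarrow> Kf r (cnj l - nu0)) F"
    by (rule Kf_tendsto[OF _ n2 r0]) (intro tendsto_intros lamT nuT)
  have w00: "w0 0 = (f0 - a0 - b0 - of_real B * exp (- nu0 * of_real r) * (a0 * Kf r (l - nu0) + b0 * Kf r (cnj l - nu0))) / charfun A B r nu0"
    by (rule w0_lemma[OF r d0 b0 nz])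
  have wm0: "w0 (-r) = exp (- nu0 * of_real r) * (w0 0 - a0 * Kf r (l - nu0) - b0 * Kf r (cnj l - nu0))"
    by (rule end_lemma[OF r d0])
  have T: "((\<lambda>e. (f e - a e - b e - of_real (Be e) * exp (- nu e * of_real r) * (a e * Kf r (lam e - nu e) + b e * Kf r (cnj (lam e) - nu e))) / charfun (Ae e) (Be e) r (nu e))
     \<longlongrightarrow> w0 0) F"
    unfolding w00 by (intro tendsto_intros fT aT bT BT nuT K1 K2 chT nz)
  show T0: "((\<lambda>e. w e 0) \<longlongrightarrow> w0 0) F"
  proof (rule Lim_transform_eventually[OF T])
    show "\<forall>\<^sub>F e in F. (f e - a e - b e - of_real (Be e) * exp (- nu e * of_real r) * (a e * Kf r (lam e - nu e) + b e * Kf r (cnj (lam e) - nu e))) / charfun (Ae e) (Be e) r (nu e) = w e 0"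
      using eventually_conj[OF ev evc] by eventually_elim (metis w0_lemma[OF r])
  qed
  have Tm: "((\<lambda>e. exp (- nu e * of_real r) * (w e 0 - a e * Kf r (lam e - nu e) - b e * Kf r (cnj (lam e) - nu e))) \<longlongrightarrow> w0 (-r)) F"
    unfolding wm0 by (intro tendsto_intros T0 aT bT nuT K1 K2)
  show "((\<lambda>e. w e (-r)) \<longlongrightarrow> w0 (-r)) F"
  proof (rule Lim_transform_eventually[OF Tm])
    show "\<forall>\<^sub>F e in F. exp (- nu e * of_real r) * (w e 0 - a e * Kf r (lam e - nu e) - b e * Kf r (cnj (lam e) - nu e)) = w e (-r)"
      using ev by eventually_elim (metis end_lemma[OF r])
  qed
qed

lemma Psi0_tendsto:
  assumes "(A \<longlongrightarrow> A0) F" "(lam \<longlongrightarrow> l) F" "(1 - A0 * r + Re l * r)\<^sup>2 + (Im l)\<^sup>2 * r\<^sup>2 \<noteq> 0"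
  shows "((\<lambda>e. Psi0 (A e) r (lam e)) \<longlongrightarrow> Psi0 A0 r l) F"
  unfolding Psi0_def by (intro tendsto_intros assms(1,2)) (metis assms(3) of_real_eq_0_iff)

lemma sys_unique:
  assumes D: "Delta A B r lam \<noteq> 0"
  shows "(\<exists>!XY. sysP A B C r lam w20 w11 w02 (fst XY) (snd XY))
    \<and> (\<forall>X Y. sysP A B C r lam w20 w11 w02 X Y \<longrightarrow> X = (of_real B * R1 A C r lam w20 w11 w02 - R2 A C r lam w20 w11 w02) / Delta A B r lam)"
proof -
  define E where "E = exp (- kappa lam * of_real r)"
  define k where "k = kappa lam"
  define P1 where "P1 = R1 A C r lam w20 w11 w02"
  define P2 where "P2 = R2 A C r lam w20 w11 w02"
  have D': "- of_real B * E - of_real A + k \<noteq> 0" using D by (simp add: Delta_def E_def k_def)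
  have sol: "sysP A B C r lam w20 w11 w02 X Y \<longleftrightarrow> X = (of_real B * P1 - P2) / (- of_real B * E - of_real A + k) \<and> Y = P1 + E * X" for X Y
  proof
    assume "sysP A B C r lam w20 w11 w02 X Y"
    then have 1: "- E * X + Y = P1" and 2: "(of_real A - k) * X + of_real B * Y = P2"
      by (simp_all add: sysP_def E_def k_def P1_def P2_def)
    from 1 have Y: "Y = P1 + E * X" by (simp add: algebra_simps)
    from 2[unfolded Y] have "(- of_real B * E - of_real A + k) * X = of_real B * P1 - P2" by (simp add: algebra_simps)
    with D' Y show "X = (of_real B * P1 - P2) / (- of_real B * E - of_real A + k) \<and> Y = P1 + E * X"
      by (simp add: field_simps)
  next
    assume a: "X = (of_real B * P1 - P2) / (- of_real B * E - of_real A + k) \<and> Y = P1 + E * X"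
    then have X: "(- of_real B * E - of_real A + k) * X = of_real B * P1 - P2" using D' by (simp add: field_simps)
    have "(of_real A - k) * X + of_real B * (P1 + E * X) = P2" using X by (simp add: algebra_simps)
    then show "sysP A B C r lam w20 w11 w02 X Y" using a
      by (simp add: sysP_def E_def k_def P1_def P2_def)
  qed
  have DD: "Delta A B r lam = - of_real B * E - of_real A + k" by (simp add: Delta_def E_def k_def)
  show ?thesis
  proof
    show "\<exists>!XY. sysP A B C r lam w20 w11 w02 (fst XY) (snd XY)"
    proof (rule ex1I[where a = "((of_real B * P1 - P2) / (- of_real B * E - of_real A + k),
          P1 + E * ((of_real B * P1 - P2) / (- of_real B * E - of_real A + k)))"])
      show "sysP A B C r lam w20 w11 w02 (fst ((of_real B * P1 - P2) / (- of_real B * E - of_real A + k),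
          P1 + E * ((of_real B * P1 - P2) / (- of_real B * E - of_real A + k))))
        (snd ((of_real B * P1 - P2) / (- of_real B * E - of_real A + k),
          P1 + E * ((of_real B * P1 - P2) / (- of_real B * E - of_real A + k))))"
        unfolding sol by simp
      fix XY :: "complex \<times> complex"
      assume "sysP A B C r lam w20 w11 w02 (fst XY) (snd XY)"
      then show "XY = ((of_real B * P1 - P2) / (- of_real B * E - of_real A + k),
          P1 + E * ((of_real B * P1 - P2) / (- of_real B * E - of_real A + k)))"
        unfolding sol by (cases XY) simp
    qed
    show "\<forall>X Y. sysP A B C r lam w20 w11 w02 X Y \<longrightarrow> X = (of_real B * R1 A C r lam w20 w11 w02 - R2 A C r lam w20 w11 w02) / Delta A B r lam"
      unfolding sol DD P1_def P2_def by simp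
  qed
qed

theorem proposition4p3:
  fixes r A B \<omega> :: real
    and C :: "nat \<Rightarrow> nat \<Rightarrow> real"
    and Ae Be :: "real \<Rightarrow> real"
    and lam :: "real \<Rightarrow> complex"
    and w20 w11 w02 :: "real \<Rightarrow> complex"
    and we20 we11 we02 :: "real \<Rightarrow> real \<Rightarrow> complex"
  assumes r_pos: "r > 0" and om_pos: "\<omega> > 0"
    and root_pos: "charfun A B r (\<i> * of_real \<omega>) = 0"
    and root_neg: "charfun A B r (- \<i> * of_real \<omega>) = 0"
    and other_roots: "\<forall>z. charfun A B r z = 0 \<longrightarrow> z \<noteq> \<i> * of_real \<omega>
                          \<longrightarrow> z \<noteq> - \<i> * of_real \<omega> \<longrightarrow> Re z < 0"
    and Ae_smooth: "\<forall>n. \<forall>e>0. (deriv ^^ n) Ae differentiable (at e)"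
    and Be_smooth: "\<forall>n. \<forall>e>0. (deriv ^^ n) Be differentiable (at e)"
    and Ae_lim: "(Ae \<longlongrightarrow> A) (at_right 0)"
    and Be_lim: "(Be \<longlongrightarrow> B) (at_right 0)"
    and lam_root: "eventually (\<lambda>e. charfun (Ae e) (Be e) r (lam e) = 0
                               \<and> Re (lam e) > 0) (at_right 0)"
    and lam_other: "eventually (\<lambda>e. \<forall>z. charfun (Ae e) (Be e) r z = 0 \<longrightarrow> z \<noteq> lam e
                               \<longrightarrow> z \<noteq> cnj (lam e) \<longrightarrow> Re z < 0) (at_right 0)"
    and lam_lim: "(lam \<longlongrightarrow> \<i> * of_real \<omega>) (at_right 0)"
    and w_unpert: "second_order A B r (\<i> * of_real \<omega>) C w20 w11 w02"
    and w_pert: "eventually (\<lambda>e. second_order (Ae e) (Be e) r (lam e) C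
                                  (we20 e) (we11 e) (we02 e)) (at_right 0)"
  shows "eventually (\<lambda>e. (\<exists>!XY. sysP (Ae e) (Be e) C r (lam e) (we20 e) (we11 e) (we02 e)
                                  (fst XY) (snd XY))
           \<and> (\<forall>X Y. sysP (Ae e) (Be e) C r (lam e) (we20 e) (we11 e) (we02 e) X Y
                 \<longrightarrow> X = (of_real (Be e) * R1 (Ae e) C r (lam e) (we20 e) (we11 e) (we02 e)
                          - R2 (Ae e) C r (lam e) (we20 e) (we11 e) (we02 e))
                         / Delta (Ae e) (Be e) r (lam e))) (at_right 0)
       \<and> ((\<lambda>e. (of_real (Be e) * R1 (Ae e) C r (lam e) (we20 e) (we11 e) (we02 e)
                  - R2 (Ae e) C r (lam e) (we20 e) (we11 e) (we02 e))
                 / Delta (Ae e) (Be e) r (lam e))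
           \<longlongrightarrow> W21 A B C r \<omega> w20 w11 w02) (at_right 0)"
proof -
  define l0 where "l0 = \<i> * complex_of_real \<omega>"
  have r0: "r \<ge> 0" using r_pos by simp
  have cl0: "cnj l0 = - l0" by (simp add: l0_def)
  have l0ne: "l0 \<noteq> 0" using om_pos by (simp add: l0_def)
  have Rel0: "Re l0 = 0" by (simp add: l0_def)
  have lamT: "(lam \<longlongrightarrow> l0) (at_right 0)" using lam_lim by (simp add: l0_def)
  have cnjT: "((\<lambda>e. cnj (lam e)) \<longlongrightarrow> cnj l0) (at_right 0)" by (intro tendsto_intros lamT)
  have AT: "((\<lambda>e. complex_of_real (Ae e)) \<longlongrightarrow> complex_of_real A) (at_right 0)" by (intro tendsto_intros Ae_lim)
  have BT: "((\<lambda>e. complex_of_real (Be e)) \<longlongrightarrow> complex_of_real B) (at_right 0)" by (intro tendsto_intros Be_lim)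
  have nores: "charfun A B r z \<noteq> 0" if "Re z = 0" "z \<noteq> l0" "z \<noteq> - l0" for z
    using other_roots that by (auto simp: l0_def)
  have c2: "charfun A B r (2 * l0) \<noteq> 0" by (rule nores) (use l0ne in \<open>auto simp: l0_def\<close>)
  have c0: "charfun A B r (l0 + cnj l0) \<noteq> 0" by (rule nores) (use l0ne in \<open>auto simp: cl0\<close>)
  have cm2: "charfun A B r (2 * cnj l0) \<noteq> 0" by (rule nores) (use l0ne in \<open>auto simp: l0_def\<close>)
  define fe where "fe e = fcoef C r (lam e) (we20 e) (we11 e) (we02 e)" for e
  define ge where "ge e = gcoef (Ae e) C r (lam e) (we20 e) (we11 e) (we02 e)" for e
  define f0 where "f0 = fcoef C r l0 w20 w11 w02"
  define g0 where "g0 = gcoef A C r l0 w20 w11 w02"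
  have ge: "ge e i j = Psi0 (Ae e) r (lam e) * fe e i j" for e i j by (simp add: ge_def fe_def gcoef_def)
  have g0: "g0 i j = Psi0 A r l0 * f0 i j" for i j by (simp add: g0_def f0_def gcoef_def)
  have PsT: "((\<lambda>e. Psi0 (Ae e) r (lam e)) \<longlongrightarrow> Psi0 A r l0) (at_right 0)"
  proof (rule Psi0_tendsto[OF Ae_lim lamT])
    have "(Im l0)\<^sup>2 * r\<^sup>2 > 0" using om_pos r_pos by (simp add: l0_def)
    then show "(1 - A * r + Re l0 * r)\<^sup>2 + (Im l0)\<^sup>2 * r\<^sup>2 \<noteq> 0"
      by (metis add_nonneg_pos less_irrefl zero_le_power2)
  qed
  have fT20: "((\<lambda>e. fe e 2 0) \<longlongrightarrow> f0 2 0) (at_right 0)"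
    unfolding fe_def f0_def fcoef_20 by (intro tendsto_intros lamT)
  have fT11: "((\<lambda>e. fe e 1 1) \<longlongrightarrow> f0 1 1) (at_right 0)"
    unfolding fe_def f0_def fcoef_11 by (intro tendsto_intros lamT)
  have fT02: "((\<lambda>e. fe e 0 2) \<longlongrightarrow> f0 0 2) (at_right 0)"
    unfolding fe_def f0_def fcoef_02 by (intro tendsto_intros lamT)
  have gT20: "((\<lambda>e. ge e 2 0) \<longlongrightarrow> g0 2 0) (at_right 0)" unfolding ge g0 by (intro tendsto_intros PsT fT20)
  have gT11: "((\<lambda>e. ge e 1 1) \<longlongrightarrow> g0 1 1) (at_right 0)" unfolding ge g0 by (intro tendsto_intros PsT fT11)
  have gT02: "((\<lambda>e. ge e 0 2) \<longlongrightarrow> g0 0 2) (at_right 0)" unfolding ge g0 by (intro tendsto_intros PsT fT02)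
  have evP: "eventually (\<lambda>e. second_order (Ae e) (Be e) r (lam e) C (we20 e) (we11 e) (we02 e)) (at_right 0)"
    by (rule w_pert)
  note U = so_parts[OF w_unpert[folded l0_def], folded f0_def g0_def]
  have wT20: "((\<lambda>e. we20 e 0) \<longlongrightarrow> w20 0) (at_right 0) \<and> ((\<lambda>e. we20 e (-r)) \<longlongrightarrow> w20 (-r)) (at_right 0)"
  proof -
    have ev: "eventually (\<lambda>e. (\<forall>\<theta>\<in>{-r..0}. (we20 e has_vector_derivative ((2 * lam e) * we20 e \<theta> + ge e 2 0 * exp (lam e * of_real \<theta>) + cnj (ge e 0 2) * exp (cnj (lam e) * of_real \<theta>))) (at \<theta> within {-r..0}))
           \<and> (2 * lam e) * we20 e 0 + ge e 2 0 + cnj (ge e 0 2) = of_real (Ae e) * we20 e 0 + of_real (Be e) * we20 e (-r) + fe e 2 0) (at_right 0)"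
      using evP by eventually_elim (unfold fe_def ge_def, metis so_parts)
    have nuT: "((\<lambda>e. 2 * lam e) \<longlongrightarrow> 2 * l0) (at_right 0)" by (intro tendsto_intros lamT)
    have bT: "((\<lambda>e. cnj (ge e 0 2)) \<longlongrightarrow> cnj (g0 0 2)) (at_right 0)" by (intro tendsto_intros gT02)
    have n1: "l0 - 2 * l0 \<noteq> 0" "cnj l0 - 2 * l0 \<noteq> 0" using l0ne by (simp_all add: cl0)
    show ?thesis using endpoint_tendsto[OF r_pos lamT Ae_lim Be_lim nuT gT20 bT fT20 c2 n1 ev U(1) U(2)]
      by blast
  qed
  have wT11: "((\<lambda>e. we11 e 0) \<longlongrightarrow> w11 0) (at_right 0) \<and> ((\<lambda>e. we11 e (-r)) \<longlongrightarrow> w11 (-r)) (at_right 0)"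
  proof -
    have ev: "eventually (\<lambda>e. (\<forall>\<theta>\<in>{-r..0}. (we11 e has_vector_derivative ((lam e + cnj (lam e)) * we11 e \<theta> + ge e 1 1 * exp (lam e * of_real \<theta>) + cnj (ge e 1 1) * exp (cnj (lam e) * of_real \<theta>))) (at \<theta> within {-r..0}))
           \<and> (lam e + cnj (lam e)) * we11 e 0 + ge e 1 1 + cnj (ge e 1 1) = of_real (Ae e) * we11 e 0 + of_real (Be e) * we11 e (-r) + fe e 1 1) (at_right 0)"
      using evP by eventually_elim (unfold fe_def ge_def, metis so_parts)
    have nuT: "((\<lambda>e. lam e + cnj (lam e)) \<longlongrightarrow> l0 + cnj l0) (at_right 0)" by (intro tendsto_intros lamT)
    have bT: "((\<lambda>e. cnj (ge e 1 1)) \<longlongrightarrow> cnj (g0 1 1)) (at_right 0)" by (intro tendsto_intros gT11)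
    have n1: "l0 - (l0 + cnj l0) \<noteq> 0" "cnj l0 - (l0 + cnj l0) \<noteq> 0" using l0ne by (simp_all add: cl0)
    show ?thesis using endpoint_tendsto[OF r_pos lamT Ae_lim Be_lim nuT gT11 bT fT11 c0 n1 ev U(3) U(4)]
      by blast
  qed
  have wT02: "((\<lambda>e. we02 e 0) \<longlongrightarrow> w02 0) (at_right 0) \<and> ((\<lambda>e. we02 e (-r)) \<longlongrightarrow> w02 (-r)) (at_right 0)"
  proof -
    have ev: "eventually (\<lambda>e. (\<forall>\<theta>\<in>{-r..0}. (we02 e has_vector_derivative ((2 * cnj (lam e)) * we02 e \<theta> + ge e 0 2 * exp (lam e * of_real \<theta>) + cnj (ge e 2 0) * exp (cnj (lam e) * of_real \<theta>))) (at \<theta> within {-r..0}))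
           \<and> (2 * cnj (lam e)) * we02 e 0 + ge e 0 2 + cnj (ge e 2 0) = of_real (Ae e) * we02 e 0 + of_real (Be e) * we02 e (-r) + fe e 0 2) (at_right 0)"
      using evP by eventually_elim (unfold fe_def ge_def, metis so_parts)
    have nuT: "((\<lambda>e. 2 * cnj (lam e)) \<longlongrightarrow> 2 * cnj l0) (at_right 0)" by (intro tendsto_intros lamT)
    have bT: "((\<lambda>e. cnj (ge e 2 0)) \<longlongrightarrow> cnj (g0 2 0)) (at_right 0)" by (intro tendsto_intros gT20)
    have n1: "l0 - 2 * cnj l0 \<noteq> 0" "cnj l0 - 2 * cnj l0 \<noteq> 0" using l0ne by (simp_all add: cl0)
    show ?thesis using endpoint_tendsto[OF r_pos lamT Ae_lim Be_lim nuT gT02 bT fT02 cm2 n1 ev U(5) U(6)]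
      by blast
  qed
  have fT21: "((\<lambda>e. fe e 2 1) \<longlongrightarrow> f0 2 1) (at_right 0)"
    unfolding fe_def f0_def fcoef_21 F21_def using wT20 wT11 wT02 by (intro tendsto_intros lamT) auto
  have fT12: "((\<lambda>e. fe e 1 2) \<longlongrightarrow> f0 1 2) (at_right 0)"
    unfolding fe_def f0_def fcoef_12 F21_def using wT20 wT11 wT02 by (intro tendsto_intros lamT) auto
  have gT12: "((\<lambda>e. ge e 1 2) \<longlongrightarrow> g0 1 2) (at_right 0)" unfolding ge g0 by (intro tendsto_intros PsT fT12)
  have k0: "kappa l0 = l0" by (simp add: kappa_def cl0)
  have nz: "kappa l0 - 2 * l0 \<noteq> 0" "kappa l0 - (l0 + cnj l0) \<noteq> 0" "kappa l0 - 2 * cnj l0 \<noteq> 0" "2 * l0 \<noteq> 0"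
    using l0ne by (simp_all add: k0 cl0)
  have kT: "((\<lambda>e. kappa (lam e)) \<longlongrightarrow> kappa l0) (at_right 0)" unfolding kappa_def by (intro tendsto_intros lamT)
  have ST: "((\<lambda>e. Sx (lam e) (kappa (lam e)) (fe e) (ge e)) \<longlongrightarrow> Sx l0 (kappa l0) f0 g0) (at_right 0)"
    unfolding Sx_def by (intro tendsto_intros lamT kT fT21 fT20 fT11 fT02 gT20 gT11 gT02 nz)
  have QT: "((\<lambda>e. Qx (lam e) (kappa (lam e)) (ge e) (we20 e 0) (we11 e 0) (we02 e 0)) \<longlongrightarrow> Qx l0 (kappa l0) g0 (w20 0) (w11 0) (w02 0)) (at_right 0)"
    unfolding Qx_def using wT20 wT11 wT02 by (intro tendsto_intros lamT kT gT12 gT20 gT11 gT02 nz) auto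
  define x where "x e = 2 * Re (lam e) * r" for e
  have xT: "(x \<longlongrightarrow> 0) (at_right 0)"
  proof -
    have "(x \<longlongrightarrow> 2 * Re l0 * r) (at_right 0)" unfolding x_def by (intro tendsto_intros lamT)
    then show ?thesis by (simp add: Rel0)
  qed
  have xev: "eventually (\<lambda>e. x e > 0) (at_right 0)"
    using lam_root by eventually_elim (use r_pos in \<open>simp add: x_def\<close>)
  have xF: "filterlim x (at_right 0) (at_right 0)" by (rule tendsto_imp_filterlim_at_right[OF xT xev])
  have psiT: "((\<lambda>e. psi (x e)) \<longlongrightarrow> 1) (at_right 0)" by (rule filterlim_compose[OF psi_lim xF])
  have phiT: "((\<lambda>e. phi (x e)) \<longlongrightarrow> 1/2) (at_right 0)" by (rule filterlim_compose[OF phi_lim xF])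
  define E0 where "E0 = exp (- l0 * of_real r)"
  define h0 where "h0 = 1 + of_real B * E0 * of_real r"
  have h0ne: "h0 \<noteq> 0"
  proof
    assume "h0 = 0"
    moreover have "of_real B * E0 = l0 - of_real A" using root_pos by (simp add: charfun_def E0_def l0_def)
    ultimately have "Im (1 + (l0 - of_real A) * of_real r) = 0" by (simp add: h0_def)
    then show False using r_pos om_pos by (simp add: l0_def)
  qed
  have PT: "((\<lambda>e. exp (- lam e * of_real r)) \<longlongrightarrow> E0) (at_right 0)" unfolding E0_def by (intro tendsto_intros lamT)
  have hzT: "((\<lambda>e. 1 + of_real (Be e) * exp (- lam e * of_real r) * of_real r) \<longlongrightarrow> h0) (at_right 0)"
    unfolding h0_def by (intro tendsto_intros BT PT)
  have hqT: "((\<lambda>e. 1 + of_real (Be e) * exp (- lam e * of_real r) * of_real r * of_real (psi (x e))) \<longlongrightarrow> h0) (at_right 0)"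
  proof -
    have "((\<lambda>e. 1 + of_real (Be e) * exp (- lam e * of_real r) * of_real r * of_real (psi (x e))) \<longlongrightarrow> 1 + of_real B * E0 * of_real r * of_real 1) (at_right 0)"
      by (intro tendsto_intros BT PT psiT)
    then show ?thesis by (simp add: h0_def)
  qed
  have PhiT: "((\<lambda>e. of_real (Be e) * exp (- lam e * of_real r) * of_real r ^ 2 * of_real (phi (x e))
      / ((1 + of_real (Be e) * exp (- lam e * of_real r) * of_real r) * (1 + of_real (Be e) * exp (- lam e * of_real r) * of_real r * of_real (psi (x e)))))
     \<longlongrightarrow> of_real B * E0 * of_real r ^ 2 * of_real (1/2) / (h0 * h0)) (at_right 0)"
    by (intro tendsto_intros BT PT phiT hzT hqT) (simp add: h0ne)
  have evhz: "eventually (\<lambda>e. 1 + of_real (Be e) * exp (- lam e * of_real r) * of_real r \<noteq> 0) (at_right 0)"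
    by (rule tendsto_imp_eventually_ne[OF hzT h0ne])
  have evhq: "eventually (\<lambda>e. 1 + of_real (Be e) * exp (- lam e * of_real r) * of_real r * of_real (psi (x e)) \<noteq> 0) (at_right 0)"
    by (rule tendsto_imp_eventually_ne[OF hqT h0ne])
  have evD: "eventually (\<lambda>e. Delta (Ae e) (Be e) r (lam e) \<noteq> 0) (at_right 0)"
    using lam_root evhq
  proof eventually_elim
    case (elim e)
    then show ?case using Delta_eq[OF r_pos, of "Ae e" "Be e" "lam e"] by (simp add: x_def)
  qed
  have evX: "eventually (\<lambda>e. (of_real (Be e) * R1 (Ae e) C r (lam e) (we20 e) (we11 e) (we02 e) - R2 (Ae e) C r (lam e) (we20 e) (we11 e) (we02 e)) / Delta (Ae e) (Be e) r (lam e)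
     = Sx (lam e) (kappa (lam e)) (fe e) (ge e) * (of_real (Be e) * exp (- lam e * of_real r) * of_real r ^ 2 * of_real (phi (x e))
      / ((1 + of_real (Be e) * exp (- lam e * of_real r) * of_real r) * (1 + of_real (Be e) * exp (- lam e * of_real r) * of_real r * of_real (psi (x e)))))
       - Qx (lam e) (kappa (lam e)) (ge e) (we20 e 0) (we11 e 0) (we02 e 0)) (at_right 0)"
    using lam_root w_pert evhz evhq evD
  proof eventually_elim
    case (elim e)
    have m0: "lam e + cnj (lam e) \<noteq> 0" using elim(1) by (auto simp: complex_eq_iff)
    have l0': "lam e \<noteq> 0" using elim(1) by auto
    have d3: "2 * lam e \<noteq> cnj (lam e)" using elim(1) by (auto simp: complex_eq_iff)
    show ?case
      unfolding key[OF r_pos elim(2) conjunct1[OF elim(1)] m0 l0' d3 elim(5), folded fe_def ge_def]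
      unfolding Phi_eq[OF r_pos conjunct1[OF elim(1)] conjunct2[OF elim(1)] elim(3) elim(4)[unfolded x_def]] x_def ..
  qed
  have lim: "((\<lambda>e. (of_real (Be e) * R1 (Ae e) C r (lam e) (we20 e) (we11 e) (we02 e) - R2 (Ae e) C r (lam e) (we20 e) (we11 e) (we02 e)) / Delta (Ae e) (Be e) r (lam e))
      \<longlongrightarrow> Sx l0 (kappa l0) f0 g0 * (of_real B * E0 * of_real r ^ 2 * of_real (1/2) / (h0 * h0)) - Qx l0 (kappa l0) g0 (w20 0) (w11 0) (w02 0)) (at_right 0)"
  proof (rule Lim_transform_eventually)
    show "((\<lambda>e. Sx (lam e) (kappa (lam e)) (fe e) (ge e) * (of_real (Be e) * exp (- lam e * of_real r) * of_real r ^ 2 * of_real (phi (x e))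
      / ((1 + of_real (Be e) * exp (- lam e * of_real r) * of_real r) * (1 + of_real (Be e) * exp (- lam e * of_real r) * of_real r * of_real (psi (x e)))))
       - Qx (lam e) (kappa (lam e)) (ge e) (we20 e 0) (we11 e 0) (we02 e 0))
      \<longlongrightarrow> Sx l0 (kappa l0) f0 g0 * (of_real B * E0 * of_real r ^ 2 * of_real (1/2) / (h0 * h0)) - Qx l0 (kappa l0) g0 (w20 0) (w11 0) (w02 0)) (at_right 0)"
      by (intro tendsto_intros ST PhiT QT)
    show "\<forall>\<^sub>F e in at_right 0. Sx (lam e) (kappa (lam e)) (fe e) (ge e) * (of_real (Be e) * exp (- lam e * of_real r) * of_real r ^ 2 * of_real (phi (x e))
      / ((1 + of_real (Be e) * exp (- lam e * of_real r) * of_real r) * (1 + of_real (Be e) * exp (- lam e * of_real r) * of_real r * of_real (psi (x e)))))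
       - Qx (lam e) (kappa (lam e)) (ge e) (we20 e 0) (we11 e 0) (we02 e 0)
      = (of_real (Be e) * R1 (Ae e) C r (lam e) (we20 e) (we11 e) (we02 e) - R2 (Ae e) C r (lam e) (we20 e) (we11 e) (we02 e)) / Delta (Ae e) (Be e) r (lam e)"
      using evX by (rule eventually_mono) (rule sym)
  qed
  have val: "Sx l0 (kappa l0) f0 g0 * (of_real B * E0 * of_real r ^ 2 * of_real (1/2) / (h0 * h0)) - Qx l0 (kappa l0) g0 (w20 0) (w11 0) (w02 0)
     = W21 A B C r \<omega> w20 w11 w02"
    unfolding f0_def g0_def E0_def h0_def l0_def
    by (rule unpert_value[OF r_pos om_pos root_pos root_neg w_unpert]) (use c2 c0 in \<open>simp_all add: l0_def cl0\<close>)
  show ?thesis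
  proof
    show "eventually (\<lambda>e. (\<exists>!XY. sysP (Ae e) (Be e) C r (lam e) (we20 e) (we11 e) (we02 e) (fst XY) (snd XY))
           \<and> (\<forall>X Y. sysP (Ae e) (Be e) C r (lam e) (we20 e) (we11 e) (we02 e) X Y
                 \<longrightarrow> X = (of_real (Be e) * R1 (Ae e) C r (lam e) (we20 e) (we11 e) (we02 e)
                          - R2 (Ae e) C r (lam e) (we20 e) (we11 e) (we02 e))
                         / Delta (Ae e) (Be e) r (lam e))) (at_right 0)"
      using evD by eventually_elim (rule sys_unique)
    show "((\<lambda>e. (of_real (Be e) * R1 (Ae e) C r (lam e) (we20 e) (we11 e) (we02 e)
                  - R2 (Ae e) C r (lam e) (we20 e) (we11 e) (we02 e))
                 / Delta (Ae e) (Be e) r (lam e))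
           \<longlongrightarrow> W21 A B C r \<omega> w20 w11 w02) (at_right 0)"
      using lim unfolding val .
  qed
qed

end
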